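(* There exist $\mathfrak{c}$ pairwise non-homeomorphic topologies $\tau\in\mathcal{L}$ such that $(\mathbb{R},\tau)$ is completely metrizable.
   Context: $\mathfrak{c}=|\mathbb{R}|$. $\eta$ denotes the Euclidean topology on $\mathbb{R}$. $\mathcal{L}$ denotes the family of all Hausdorff topologies $\tau$ on the set $\mathbb{R}$ with $\tau\subset\eta$. *)

theory Defs
  imports "HOL-Analysis.Analysis" "HOL-Library.Equipollence"
begin

definition coarser_Hausdorff_topologies :: "real topology set" where
  "coarser_Hausdorff_topologies =
     {T. topspace T = UNIV \<and> Hausdorff_space T \<and>
         (\<forall>U. openin T U \<longrightarrow> open U)}"

end

theory Submission
  imports Defs
begin

definition hh :: "nat \<Rightarrow> real" where "hh n = 1 / (real n + 1)"

definition psi :: "nat \<Rightarrow> real \<Rightarrow> real" where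
  "psi n u = max 0 (min (min ((1 + hh n) * (u - 2 * real n)) ((1 + hh n) * (2 * real n + 3 - u)))
                      (hh n + \<bar>2 * u - 4 * real n - 3\<bar>))"

lemma hh_pos: "0 < hh n" and hh_le1: "hh n \<le> 1"
  by (auto simp: hh_def field_simps)

lemma psi_zero: "u \<le> 2 * real n \<or> u \<ge> 2 * real n + 3 \<Longrightarrow> psi n u = 0"
proof -
  assume a: "u \<le> 2 * real n \<or> u \<ge> 2 * real n + 3"
  have h: "0 < hh n" by (rule hh_pos)
  have "min ((1 + hh n) * (u - 2 * real n)) ((1 + hh n) * (2 * real n + 3 - u)) \<le> 0"
  proof (cases "u \<le> 2 * real n")
    case True
    then have "(1 + hh n) * (u - 2 * real n) \<le> 0" using h by (intro mult_nonneg_nonpos) auto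
    then show ?thesis by simp
  next
    case False
    then have "(1 + hh n) * (2 * real n + 3 - u) \<le> 0" using a h by (intro mult_nonneg_nonpos) auto
    then show ?thesis by simp
  qed
  then show ?thesis unfolding psi_def by (simp add: max_def min_def)
qed

lemma psi_V: "2 * real n + 1 \<le> u \<Longrightarrow> u \<le> 2 * real n + 2 \<Longrightarrow> psi n u = hh n + \<bar>2 * u - 4 * real n - 3\<bar>"
proof -
  assume a: "2 * real n + 1 \<le> u" "u \<le> 2 * real n + 2"
  have h: "0 < hh n" "hh n \<le> 1" by (rule hh_pos, rule hh_le1)
  have "(1 + hh n) * 1 \<le> (1 + hh n) * (u - 2 * real n)" using a h by (intro mult_left_mono) auto
  moreover have "(1 + hh n) * 1 \<le> (1 + hh n) * (2 * real n + 3 - u)" using a h by (intro mult_left_mono) auto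
  moreover have "\<bar>2 * u - 4 * real n - 3\<bar> \<le> 1" using a by auto
  ultimately have "min (min ((1 + hh n) * (u - 2 * real n)) ((1 + hh n) * (2 * real n + 3 - u)))
                      (hh n + \<bar>2 * u - 4 * real n - 3\<bar>) = hh n + \<bar>2 * u - 4 * real n - 3\<bar>"
    by (simp add: min_def)
  then show ?thesis unfolding psi_def using h by simp
qed

lemma mm1: "a \<le> c \<Longrightarrow> a \<le> b \<Longrightarrow> 0 \<le> a \<Longrightarrow> max 0 (min (min a b) c) = (a::real)"
  by (simp add: min_def max_def)
lemma mm2: "b \<le> c \<Longrightarrow> b \<le> a \<Longrightarrow> 0 \<le> b \<Longrightarrow> max 0 (min (min a b) c) = (b::real)"
  by (simp add: min_def max_def)

lemma psi_up: "2 * real n \<le> u \<Longrightarrow> u \<le> 2 * real n + 1 \<Longrightarrow> psi n u = (1 + hh n) * (u - 2 * real n)"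
proof -
  assume a: "2 * real n \<le> u" "u \<le> 2 * real n + 1"
  have h: "0 < hh n" "hh n \<le> 1" by (rule hh_pos, rule hh_le1)
  have "(1 + hh n) * (u - 2 * real n) \<le> (1 + hh n) * 1" using a h by (intro mult_left_mono) auto
  moreover have "(1 + hh n) * 2 \<le> (1 + hh n) * (2 * real n + 3 - u)" using a h by (intro mult_left_mono) auto
  moreover have "\<bar>2 * u - 4 * real n - 3\<bar> \<ge> 1" using a by auto
  moreover have "(1 + hh n) * (u - 2 * real n) \<ge> 0" using a h by simp
  ultimately show ?thesis unfolding psi_def using h by (intro mm1) (smt (verit))+
qed

lemma psi_down: "2 * real n + 2 \<le> u \<Longrightarrow> u \<le> 2 * real n + 3 \<Longrightarrow> psi n u = (1 + hh n) * (2 * real n + 3 - u)"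
proof -
  assume a: "2 * real n + 2 \<le> u" "u \<le> 2 * real n + 3"
  have h: "0 < hh n" "hh n \<le> 1" by (rule hh_pos, rule hh_le1)
  have "(1 + hh n) * (2 * real n + 3 - u) \<le> (1 + hh n) * 1" using a h by (intro mult_left_mono) auto
  moreover have "(1 + hh n) * 2 \<le> (1 + hh n) * (u - 2 * real n)" using a h by (intro mult_left_mono) auto
  moreover have "\<bar>2 * u - 4 * real n - 3\<bar> \<ge> 1" using a by auto
  moreover have "(1 + hh n) * (2 * real n + 3 - u) \<ge> 0" using a h by simp
  ultimately show ?thesis unfolding psi_def using h by (intro mm2) (smt (verit))+
qed

lemma psi_nonneg: "0 \<le> psi n u" by (simp add: psi_def)

lemma psi_le: "psi n u \<le> 3"
proof -
  have h: "0 < hh n" "hh n \<le> 1" by (rule hh_pos, rule hh_le1)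
  have "min ((1 + hh n) * (u - 2 * real n)) ((1 + hh n) * (2 * real n + 3 - u)) \<le> 3"
  proof (cases "u \<le> 2 * real n + 3/2")
    case True
    then have "(1 + hh n) * (u - 2 * real n) \<le> (1 + hh n) * (3/2)" using h by (intro mult_left_mono) auto
    also have "\<dots> \<le> 3" using h by simp
    finally show ?thesis by simp
  next
    case False
    then have "(1 + hh n) * (2 * real n + 3 - u) \<le> (1 + hh n) * (3/2)" using h by (intro mult_left_mono) auto
    also have "\<dots> \<le> 3" using h by simp
    finally show ?thesis by simp
  qed
  then show ?thesis unfolding psi_def by simp
qed

lemma lip_max: "\<bar>a - b\<bar> \<le> L \<Longrightarrow> \<bar>c - d\<bar> \<le> L \<Longrightarrow> \<bar>max a c - max b d\<bar> \<le> (L::real)"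
  by (auto simp: max_def)
lemma lip_min: "\<bar>a - b\<bar> \<le> L \<Longrightarrow> \<bar>c - d\<bar> \<le> L \<Longrightarrow> \<bar>min a c - min b d\<bar> \<le> (L::real)"
  by (auto simp: min_def)

lemma psi_lip: "\<bar>psi n u - psi n v\<bar> \<le> 2 * \<bar>u - v\<bar>"
proof -
  have h: "0 < hh n" "hh n \<le> 1" by (rule hh_pos, rule hh_le1)
  have 1: "\<bar>(1 + hh n) * (u - 2 * real n) - (1 + hh n) * (v - 2 * real n)\<bar> \<le> 2 * \<bar>u - v\<bar>"
  proof -
    have "\<bar>(1 + hh n) * (u - 2 * real n) - (1 + hh n) * (v - 2 * real n)\<bar> = (1 + hh n) * \<bar>u - v\<bar>"
    proof -
      have "(1 + hh n) * (u - 2 * real n) - (1 + hh n) * (v - 2 * real n) = (1 + hh n) * (u - v)" by algebra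
      then show ?thesis using h by (simp add: abs_mult)
    qed
    also have "\<dots> \<le> 2 * \<bar>u - v\<bar>" using h by (intro mult_right_mono) auto
    finally show ?thesis .
  qed
  have 2: "\<bar>(1 + hh n) * (2 * real n + 3 - u) - (1 + hh n) * (2 * real n + 3 - v)\<bar> \<le> 2 * \<bar>u - v\<bar>"
  proof -
    have "\<bar>(1 + hh n) * (2 * real n + 3 - u) - (1 + hh n) * (2 * real n + 3 - v)\<bar> = (1 + hh n) * \<bar>u - v\<bar>"
    proof -
      have "(1 + hh n) * (2 * real n + 3 - u) - (1 + hh n) * (2 * real n + 3 - v) = (1 + hh n) * (v - u)" by algebra
      then show ?thesis using h by (simp add: abs_mult abs_minus_commute)
    qed
    also have "\<dots> \<le> 2 * \<bar>u - v\<bar>" using h by (intro mult_right_mono) auto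
    finally show ?thesis .
  qed
  have 3: "\<bar>(hh n + \<bar>2 * u - 4 * real n - 3\<bar>) - (hh n + \<bar>2 * v - 4 * real n - 3\<bar>)\<bar> \<le> 2 * \<bar>u - v\<bar>"
    by (simp add: abs_le_iff abs_if) 
  have 0: "\<bar>(0::real) - 0\<bar> \<le> 2 * \<bar>u - v\<bar>" by simp
  show ?thesis unfolding psi_def
    by (intro lip_max[OF 0] lip_min[OF lip_min[OF 1 2] 3])
qed

definition bump :: "real \<Rightarrow> real" where "bump z = max 0 (1 - 4 * \<bar>z\<bar>)"

definition phif :: "real \<Rightarrow> real \<Rightarrow> real" where
  "phif u y = psi (nat (round y)) u * bump (y - of_int (round y))"

lemma bump_le1: "bump z \<le> 1" and bump_nonneg: "0 \<le> bump z"
  by (auto simp: bump_def)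

lemma phif_nat[simp]: "phif u (real n) = psi n u"
proof -
  have "round (real n) = int n" by (simp add: round_unique)
  then show ?thesis by (simp add: phif_def bump_def)
qed

lemma phif_abs_le: "\<bar>phif u y\<bar> \<le> psi (nat (round y)) u"
proof -
  have "\<bar>phif u y\<bar> = psi (nat (round y)) u * bump (y - of_int (round y))"
    by (simp add: phif_def abs_mult psi_nonneg bump_nonneg)
  also have "\<dots> \<le> psi (nat (round y)) u * 1" by (intro mult_left_mono bump_le1 psi_nonneg)
  finally show ?thesis by simp
qed

lemma phif_zero: "psi (nat (round y)) u = 0 \<Longrightarrow> phif u y = 0"
  by (simp add: phif_def)

lemma phif_lip: "\<bar>phif u y - phif v y\<bar> \<le> 2 * \<bar>u - v\<bar>"
proof -
  let ?n = "nat (round y)" and ?b = "bump (y - of_int (round y))"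
  have "\<bar>phif u y - phif v y\<bar> = \<bar>psi ?n u - psi ?n v\<bar> * ?b"
    by (simp add: phif_def abs_mult bump_nonneg left_diff_distrib[symmetric])
  also have "\<dots> \<le> \<bar>psi ?n u - psi ?n v\<bar> * 1" by (intro mult_left_mono bump_le1) auto
  also have "\<dots> \<le> 2 * \<bar>u - v\<bar>" using psi_lip by simp
  finally show ?thesis .
qed

lemma phif_cont: "continuous_on UNIV (phif u)"
proof -
  define I where "I = (\<lambda>k::int. {of_int k - 1/2 <..< of_int k + (1/2::real)})"
  define J where "J = (\<lambda>k::int. {of_int k + 1/4 <..< of_int k + (3/4::real)})"
  have cov: "UNIV = \<Union>(range I \<union> range J)"
  proof -
    { fix y :: real
      have "y \<in> I (round y) \<or> y \<in> J (round y) \<or> y \<in> J (round y - 1)"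
        using of_int_round_ge[of y] of_int_round_le[of y]
        by (cases "y = of_int (round y) + 1/2") (auto simp: I_def J_def) }
    then show ?thesis by blast
  qed
  have "continuous_on (\<Union>(range I \<union> range J)) (phif u)"
  proof (rule continuous_on_open_Union)
    fix S assume "S \<in> range I \<union> range J"
    then consider k where "S = I k" | k where "S = J k" by blast
    then show "open S" by cases (auto simp: I_def J_def)
    show "continuous_on S (phif u)"
    proof -
      consider k where "S = I k" | k where "S = J k" using \<open>S \<in> range I \<union> range J\<close> by blast
      then show ?thesis
      proof cases
        case (1 k)
        have "continuous_on S (\<lambda>y. psi (nat k) u * bump (y - of_int k))"
          unfolding bump_def by (intro continuous_intros)
        note cc = this
        have rk: "\<And>y. y \<in> S \<Longrightarrow> round y = k"
          unfolding 1 I_def by (intro round_unique) auto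
        show ?thesis using cc
          by (rule continuous_on_cong[THEN iffD1, rotated 2]) (auto simp: phif_def rk)
      next
        case (2 k)
        have z: "phif u y = 0" if "y \<in> S" for y
        proof -
          have y: "of_int k + 1/4 < y" "y < of_int k + 3/4" using that 2 by (auto simp: J_def)
          have "\<bar>y - of_int (round y)\<bar> \<ge> 1/4"
          proof (cases "y < of_int k + 1/2")
            case True
            then have "round y = k" using y by (intro round_unique) auto
            then show ?thesis using y by auto
          next
            case False
            then have "round y = k + 1" using y by (intro round_unique) auto
            then show ?thesis using y by auto
          qed
          then have "bump (y - of_int (round y)) = 0" by (simp add: bump_def)
          then show ?thesis by (simp add: phif_def)
        qed
        show ?thesis by (rule continuous_on_cong[THEN iffD1, rotated 2, of _ "\<lambda>_. 0"]) (auto simp: z)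
      qed
    qed
  qed
  then show ?thesis using cov by simp
qed

definition Phi :: "real \<Rightarrow> (real \<Rightarrow>\<^sub>C real)" where
  "Phi u = Bcontfun (phif u)"

lemma Phi_mem: "phif u \<in> bcontfun"
proof (rule bcontfun_normI[where b=3])
  show "continuous_on UNIV (phif u)" by (rule phif_cont)
  fix y show "norm (phif u y) \<le> 3" using phif_abs_le[of u y] psi_le[of "nat (round y)" u] by simp
qed

lemma Phi_apply[simp]: "apply_bcontfun (Phi u) y = phif u y"
  unfolding Phi_def by (simp add: Bcontfun_inverse[OF Phi_mem])

lemma dist_Phi_le: "dist (Phi u) (Phi v) \<le> 2 * \<bar>u - v\<bar>"
  by (rule dist_bound) (simp add: dist_real_def phif_lip)

lemma dist_Phi_ge: "\<bar>phif u y - phif v y\<bar> \<le> dist (Phi u) (Phi v)"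
  using dist_bounded[of "Phi u" y "Phi v"] by (simp add: dist_real_def)

lemma continuous_Phi: "continuous_on S Phi"
  unfolding continuous_on_iff
proof (intro ballI allI impI)
  fix x e assume "0 < (e::real)"
  then show "\<exists>d>0. \<forall>x'\<in>S. dist x' x < d \<longrightarrow> dist (Phi x') (Phi x) < e"
    by (intro exI[of _ "e/3"]) (auto intro: le_less_trans[OF dist_Phi_le] simp: dist_real_def)
qed

definition cc :: "nat set \<Rightarrow> nat \<Rightarrow> real" where
  "cc A m = (let p = fst (prod_decode m); i = fst (prod_decode p); q = snd (prod_decode p);
                 l = fst (prod_decode q); j = snd (prod_decode q)
             in if i \<in> A then real (3*i+3) + real (min j (l+1)) / real (l+1) else real (3*i+3))"

definition Cmp :: "nat set \<Rightarrow> nat \<Rightarrow> real set" where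
  "Cmp A i = (if i \<in> A then {real (3*i+3) .. real (3*i+4)} else {real (3*i+3)})"

definition KK :: "nat set \<Rightarrow> real set" where "KK A = (\<Union>i. Cmp A i)"

lemma Cmp_sub: "Cmp A i \<subseteq> {real (3*i+3) .. real (3*i+4)}"
  by (auto simp: Cmp_def)

lemma Cmp_ne: "real (3*i+3) \<in> Cmp A i"
  by (auto simp: Cmp_def)

lemma Cmp_closed: "closed (Cmp A i)"
  by (auto simp: Cmp_def)

lemma KK_ge3: "x \<in> KK A \<Longrightarrow> 3 \<le> x"
  using Cmp_sub by (force simp: KK_def)

lemma cc_in_Cmp: "cc A m \<in> Cmp A (fst (prod_decode (fst (prod_decode m))))"
proof -
  define i where "i = fst (prod_decode (fst (prod_decode m)))"
  define l where "l = fst (prod_decode (snd (prod_decode (fst (prod_decode m)))))"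
  define j where "j = snd (prod_decode (snd (prod_decode (fst (prod_decode m)))))"
  have e: "cc A m = (if i \<in> A then real (3*i+3) + real (min j (l+1)) / real (l+1) else real (3*i+3))"
    unfolding cc_def i_def l_def j_def Let_def by simp
  have "real (min j (l+1)) / real (l+1) \<le> 1" by (simp add: divide_le_eq_1)
  then show ?thesis unfolding e i_def[symmetric] by (auto simp: Cmp_def)
qed

lemma cc_in_KK: "cc A m \<in> KK A"
  using cc_in_Cmp unfolding KK_def by blast

lemma cc_ge3: "3 \<le> cc A m"
  using KK_ge3 cc_in_KK by blast

lemma KK_closed: "closed (KK A)"
proof -
  have "KK A = (\<Inter>N. (\<Union>i<N. Cmp A i) \<union> {real (3*N+2)..})"
  proof
    show "KK A \<subseteq> (\<Inter>N. (\<Union>i<N. Cmp A i) \<union> {real (3*N+2)..})"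
    proof
      fix x assume "x \<in> KK A"
      then obtain i where i: "x \<in> Cmp A i" by (auto simp: KK_def)
      show "x \<in> (\<Inter>N. (\<Union>i<N. Cmp A i) \<union> {real (3*N+2)..})"
      proof
        fix N :: nat
        show "x \<in> (\<Union>i<N. Cmp A i) \<union> {real (3*N+2)..}"
        proof (cases "i < N")
          case True then show ?thesis using i by auto
        next
          case False
          then have "real (3*N+2) \<le> real (3*i+3)" by simp
          then show ?thesis using i Cmp_sub[of A i] by auto
        qed
      qed
    qed
  next
    show "(\<Inter>N. (\<Union>i<N. Cmp A i) \<union> {real (3*N+2)..}) \<subseteq> KK A"
    proof
      fix x assume x: "x \<in> (\<Inter>N. (\<Union>i<N. Cmp A i) \<union> {real (3*N+2)..})"
      obtain N :: nat where "x < real N" using reals_Archimedean2 by blast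
      then have "x < real (3*N+2)" by simp
      then have "x \<in> (\<Union>i<N. Cmp A i)" using x by auto
      then show "x \<in> KK A" by (auto simp: KK_def)
    qed
  qed
  moreover have "closed (\<Inter>N. (\<Union>i<N. Cmp A i) \<union> {real (3*N+2)..})"
    by (intro closed_INT ballI closed_Un closed_UN finite_lessThan Cmp_closed) auto
  ultimately show ?thesis by simp
qed

lemma cc_dense:
  assumes k: "k \<in> KK A" and r: "0 < r"
  shows "\<exists>m\<ge>M. \<bar>cc A m - k\<bar> < r"
proof -
  obtain i where i: "k \<in> Cmp A i" using k by (auto simp: KK_def)
  obtain l where l: "inverse (real (Suc l)) < r" using reals_Archimedean[OF r] by blast
  show ?thesis
  proof (cases "i \<in> A")
    case False
    then have kk: "k = real (3*i+3)" using i by (simp add: Cmp_def)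
    define m where "m = prod_encode (prod_encode (i, 0), M)"
    have "cc A m = real (3*i+3)" using False by (simp add: cc_def m_def Let_def)
    moreover have "M \<le> m" unfolding m_def by (rule le_prod_encode_2)
    ultimately show ?thesis using kk r by (intro exI[of _ m]) auto
  next
    case True
    then have kk: "real (3*i+3) \<le> k" "k \<le> real (3*i+4)" using i by (auto simp: Cmp_def)
    define th where "th = k - real (3*i+3)"
    have th: "0 \<le> th" "th \<le> 1" using kk by (auto simp: th_def)
    define j where "j = nat \<lfloor>th * real (l+1)\<rfloor>"
    have fl: "real j \<le> th * real (l+1)" "th * real (l+1) < real j + 1"
      using th unfolding j_def by (auto simp: of_nat_nat)
    have jle: "j \<le> l + 1"
    proof -
      have "th * real (l+1) \<le> real (l+1)" using th by (simp add: mult_left_le_one_le)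
      then show ?thesis using fl(1) by linarith
    qed
    define m where "m = prod_encode (prod_encode (i, prod_encode (l, j)), M)"
    have cm: "cc A m = real (3*i+3) + real j / real (l+1)" using True jle
      by (simp add: cc_def m_def Let_def min_def)
    have "\<bar>real j / real (l+1) - th\<bar> < inverse (real (Suc l))"
    proof -
      have pos: "0 < real (l+1)" by simp
      have "\<bar>real j / real (l+1) - th\<bar> = \<bar>real j - th * real (l+1)\<bar> / real (l+1)"
        using pos by (simp add: field_simps)
      also have "\<dots> < 1 / real (l+1)"
        using fl pos by (intro divide_strict_right_mono) auto
      finally show ?thesis by (simp add: field_simps)
    qed
    then have "\<bar>cc A m - k\<bar> < r" using cm l unfolding th_def by simp
    moreover have "M \<le> m" unfolding m_def by (rule le_prod_encode_2)
    ultimately show ?thesis by blast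
  qed
qed

definition nd :: "nat set \<Rightarrow> nat \<Rightarrow> real" where
  "nd A k = (if k = 0 then 0 else if odd k then cc A ((k - 1) div 2) - 1 else cc A ((k - 2) div 2) + 1)"

definition XX :: "nat set \<Rightarrow> real \<Rightarrow> real" where
  "XX A u = nd A (nat \<lfloor>u\<rfloor>) + (u - of_int \<lfloor>u\<rfloor>) * (nd A (Suc (nat \<lfloor>u\<rfloor>)) - nd A (nat \<lfloor>u\<rfloor>))"

lemma XX_piece:
  assumes "real k \<le> u" "u \<le> real k + 1"
  shows "XX A u = nd A k + (u - real k) * (nd A (Suc k) - nd A k)"
proof (cases "u < real k + 1")
  case True
  then have "\<lfloor>u\<rfloor> = int k" using assms by linarith
  then show ?thesis by (simp add: XX_def)
next
  case False
  then have u: "u = real k + 1" using assms by simp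
  then have "\<lfloor>u\<rfloor> = int k + 1" by linarith
  then have "nat \<lfloor>u\<rfloor> = Suc k" by simp
  then show ?thesis using u by (simp add: XX_def)
qed

lemma pl_cont:
  fixes f :: "real \<Rightarrow> real"
  assumes c: "\<And>k::nat. continuous_on {real k .. real k + 1} f"
  shows "continuous_on {0..} f"
  unfolding continuous_on_eq_continuous_within
proof
  fix u :: real assume "u \<in> {0..}"
  then have u0: "0 \<le> u" by simp
  define k where "k = nat \<lfloor>u\<rfloor>"
  have k: "real k \<le> u" "u < real k + 1" using u0 unfolding k_def by linarith+
  define J where "J = (if k = 0 then {0..1} else {real k - 1 .. real k + 1})"
  have cJ: "continuous_on J f"
  proof (cases "k = 0")
    case True then show ?thesis using c[of 0] by (simp add: J_def)
  next
    case False
    then have "J = {real (k-1) .. real (k-1) + 1} \<union> {real k .. real k + 1}"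
      by (auto simp: J_def of_nat_diff)
    then show ?thesis using c[of "k-1"] c[of k] by (simp add: continuous_on_closed_Un)
  qed
  have uJ: "u \<in> J" using k by (auto simp: J_def)
  have "at u within {0..} = at u within J"
  proof (rule at_within_nhd[of u "{real k - 1 <..< real k + 1}"])
    show "u \<in> {real k - 1 <..< real k + 1}" using k by auto
    show "{0..} \<inter> {real k - 1<..<real k + 1} - {u} = J \<inter> {real k - 1<..<real k + 1} - {u}"
      by (auto simp: J_def)
  qed simp
  then show "continuous (at u within {0..}) f"
    using cJ uJ by (simp add: continuous_on_eq_continuous_within)
qed

lemma XX_cont: "continuous_on {0..} (XX A)"
proof (rule pl_cont)
  fix k :: nat
  have "continuous_on {real k .. real k + 1} (\<lambda>u. nd A k + (u - real k) * (nd A (Suc k) - nd A k))"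
    by (intro continuous_intros)
  then show "continuous_on {real k .. real k + 1} (XX A)"
    by (rule continuous_on_cong[THEN iffD1, rotated 2]) (auto simp: XX_piece)
qed

lemma nd_nonneg: "0 \<le> nd A k"
  unfolding nd_def using cc_ge3[of A "(k - 1) div 2"] cc_ge3[of A "(k - 2) div 2"] by auto

lemma XX_nonneg: assumes "0 \<le> u" shows "0 \<le> XX A u"
proof -
  define k where "k = nat \<lfloor>u\<rfloor>"
  have k: "real k \<le> u" "u \<le> real k + 1" using assms unfolding k_def by linarith+
  have "XX A u = (1 - (u - real k)) * nd A k + (u - real k) * nd A (Suc k)"
    using XX_piece[OF k] by (simp add: algebra_simps)
  also have "\<dots> \<ge> 0" using k nd_nonneg[of A] by (intro add_nonneg_nonneg mult_nonneg_nonneg) auto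
  finally show ?thesis .
qed

lemma XX_V: "2 * real n + 1 \<le> u \<Longrightarrow> u \<le> 2 * real n + 2 \<Longrightarrow> XX A u = cc A n + (2 * u - 4 * real n - 3)"
  using XX_piece[of "2*n+1" u A] by (simp add: nd_def algebra_simps)

lemma XX_0: "0 \<le> u \<Longrightarrow> u \<le> 1 \<Longrightarrow> XX A u = u * (cc A 0 - 1)"
  using XX_piece[of 0 u A] by (simp add: nd_def)

lemma XX_zero[simp]: "XX A 0 = 0"
  by (simp add: XX_def nd_def)

lemma psi_Z: "0 \<le> u \<Longrightarrow> u \<le> 1 \<Longrightarrow> psi 0 u = (1 + hh 0) * u"
  using psi_up[of 0 u] by simp

lemma psi_Z_other: "0 \<le> u \<Longrightarrow> u \<le> 1 \<Longrightarrow> k \<noteq> 0 \<Longrightarrow> psi k u = 0"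
  by (rule psi_zero) auto

lemma psi_V_other: "2 * real n + 1 \<le> u \<Longrightarrow> u \<le> 2 * real n + 2 \<Longrightarrow> k \<noteq> n \<Longrightarrow> psi k u = 0"
proof (rule psi_zero)
  assume a: "2 * real n + 1 \<le> u" "u \<le> 2 * real n + 2" "k \<noteq> n"
  show "u \<le> 2 * real k \<or> 2 * real k + 3 \<le> u"
  proof (cases "k < n")
    case True then have "real k + 1 \<le> real n" by simp
    then show ?thesis using a by auto
  next
    case False then have "real n + 1 \<le> real k" using a by simp
    then show ?thesis using a by auto
  qed
qed

lemma psi_T_other: "2 * real n + 2 \<le> u \<Longrightarrow> u \<le> 2 * real n + 3 \<Longrightarrow> k \<noteq> n \<Longrightarrow> k \<noteq> Suc n \<Longrightarrow> psi k u = 0"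
proof (rule psi_zero)
  assume a: "2 * real n + 2 \<le> u" "u \<le> 2 * real n + 3" "k \<noteq> n" "k \<noteq> Suc n"
  show "u \<le> 2 * real k \<or> 2 * real k + 3 \<le> u"
  proof (cases "k < n")
    case True then have "real k + 1 \<le> real n" by simp
    then show ?thesis using a by auto
  next
    case False then have "real n + 2 \<le> real k" using a by simp
    then show ?thesis using a by auto
  qed
qed

lemma psi_V_pos: "2 * real n + 1 \<le> u \<Longrightarrow> u \<le> 2 * real n + 2 \<Longrightarrow> 0 < psi n u"
  using psi_V[of n u] hh_pos[of n] by simp

lemma psi_T: "2 * real n + 2 \<le> u \<Longrightarrow> u \<le> 2 * real n + 3 \<Longrightarrow> psi (Suc n) u = (1 + hh (Suc n)) * (u - 2 * real n - 2)"
  using psi_up[of "Suc n" u] by (simp add: algebra_simps)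

lemma piece_cases:
  assumes "0 < u"
  obtains "u \<le> 1" | n where "2 * real n + 1 \<le> u" "u \<le> 2 * real n + 2"
    | n where "2 * real n + 2 < u" "u < 2 * real n + 3"
proof -
  consider "u \<le> 1" | "1 < u" by linarith
  then show ?thesis
  proof cases
    case 1 then show ?thesis using that by blast
  next
    case 2
    define n where "n = nat \<lfloor>(u - 1) / 2\<rfloor>"
    have fl0: "0 \<le> \<lfloor>(u - 1) / 2\<rfloor>" using 2 by simp
    have rn: "real n = of_int \<lfloor>(u - 1) / 2\<rfloor>" unfolding n_def using fl0 by simp
    have fc: "real_of_int \<lfloor>(u - 1) / 2\<rfloor> \<le> (u - 1) / 2" "(u - 1) / 2 < real_of_int \<lfloor>(u - 1) / 2\<rfloor> + 1"
      using floor_correct[of "(u - 1) / 2"] by auto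
    have n1: "2 * real n + 1 \<le> u" using fc unfolding rn by (simp add: field_simps)
    have n2: "u < 2 * real n + 3" using fc unfolding rn by (simp add: field_simps)
    note n = n1 n2
    consider "u \<le> 2 * real n + 2" | "2 * real n + 2 < u" by linarith
    then show ?thesis
    proof cases
      case 1 then show ?thesis using that n by blast
    next
      case 2 then show ?thesis using that n by blast
    qed
  qed
qed

lemma psi_T_pos:
  assumes "2 * real n + 2 < u" "u < 2 * real n + 3"
  shows "0 < psi n u" "0 < psi (Suc n) u"
proof -
  have h: "0 < hh n" "0 < hh (Suc n)" by (rule hh_pos)+
  show "0 < psi n u" using psi_down[of n u] assms h by simp
  show "0 < psi (Suc n) u" using psi_T[of n u] assms h by simp
qed

lemma psi_somepos: assumes u: "0 < u" shows "\<exists>k. 0 < psi k u"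
proof (rule piece_cases[OF u])
  assume "u \<le> 1" then show ?thesis using u psi_Z[of u] hh_pos[of 0] by (intro exI[of _ 0]) simp
next
  fix n assume "2 * real n + 1 \<le> u" "u \<le> 2 * real n + 2" then show ?thesis using psi_V_pos by blast
next
  fix n assume "2 * real n + 2 < u" "u < 2 * real n + 3" then show ?thesis using psi_T_pos by blast
qed

lemma Phi_nonzero: "0 < u \<Longrightarrow> Phi u \<noteq> 0"
proof
  assume "0 < u" "Phi u = 0"
  then obtain k where "0 < psi k u" using psi_somepos by blast
  moreover have "apply_bcontfun (Phi u) (real k) = 0" using \<open>Phi u = 0\<close> by simp
  ultimately show False by simp
qed

lemma Phi_0[simp]: "Phi 0 = 0"
  by (rule bcontfun_eqI) (simp add: psi_zero phif_def)

lemma end_inj_aux: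
  assumes u: "0 < u" and v: "0 < v" and X: "XX A u = XX A v" and P: "\<And>k. psi k u = psi k v"
    and uV: "2 * real n + 1 \<le> u" "u \<le> 2 * real n + 2"
  shows "u = v"
proof -
  have pu: "0 < psi n u" using psi_V_pos[OF uV] .
  show ?thesis
  proof (rule piece_cases[OF v])
    assume v1: "v \<le> 1"
    have "psi n v > 0" using pu P by simp
    then have n0: "n = 0" using psi_Z_other[of v n] v v1 by (cases "n = 0") auto
    have c: "3 \<le> cc A 0" by (rule cc_ge3)
    have "XX A u = cc A 0 + (2 * u - 3)" using XX_V[of 0 u A] uV n0 by simp
    moreover have "XX A v = v * (cc A 0 - 1)" using XX_0[of v A] v v1 by simp
    moreover have "v * (cc A 0 - 1) \<le> 1 * (cc A 0 - 1)" using v1 c by (intro mult_right_mono) auto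
    ultimately have "u \<le> 1" using X uV n0 by simp
    then have u1: "u = 1" using uV n0 by simp
    then have "v * (cc A 0 - 1) = 1 * (cc A 0 - 1)" using X XX_V[of 0 u A] XX_0[of v A] v v1 by simp
    then have "v = 1" using c by (simp add: mult_right_cancel)
    then show ?thesis using u1 by simp
  next
    fix m assume vV: "2 * real m + 1 \<le> v" "v \<le> 2 * real m + 2"
    have "psi n v > 0" using pu P by simp
    then have "n = m" using psi_V_other[OF vV, of n] by (cases "n = m") auto
    then show ?thesis using X XX_V[OF uV, of A] XX_V[OF vV, of A] by simp
  next
    fix m assume vT: "2 * real m + 2 < v" "v < 2 * real m + 3"
    have "psi m u > 0" "psi (Suc m) u > 0" using psi_T_pos[OF vT] P by simp_all
    then have "m = n" "Suc m = n" using psi_V_other[OF uV, of m] psi_V_other[OF uV, of "Suc m"]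
      by (cases "m = n"; cases "Suc m = n"; simp)+
    then show ?thesis by simp
  qed
qed

lemma end_inj:
  assumes u: "0 < u" and v: "0 < v" and X: "XX A u = XX A v" and P: "\<And>k. psi k u = psi k v"
  shows "u = v"
proof (rule piece_cases[OF u])
  fix n assume "2 * real n + 1 \<le> u" "u \<le> 2 * real n + 2"
  then show ?thesis using end_inj_aux[OF u v X P] by blast
next
  fix n assume uT: "2 * real n + 2 < u" "u < 2 * real n + 3"
  show ?thesis
  proof (rule piece_cases[OF v])
    fix m assume "2 * real m + 1 \<le> v" "v \<le> 2 * real m + 2"
    then show ?thesis using end_inj_aux[OF v u X[symmetric]] P by metis
  next
    assume v1: "v \<le> 1"
    have "psi (Suc n) v > 0" using psi_T_pos[OF uT] P by simp
    then show ?thesis using psi_Z_other[of v "Suc n"] v v1 by simp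
  next
    fix m assume vT: "2 * real m + 2 < v" "v < 2 * real m + 3"
    have a: "psi n v > 0" "psi (Suc n) v > 0" using psi_T_pos[OF uT] P by simp_all
    have "n = m \<or> n = Suc m" using a(1) psi_T_other[of m v n] vT by (cases "n = m \<or> n = Suc m") auto
    moreover have "Suc n = m \<or> Suc n = Suc m" using a(2) psi_T_other[of m v "Suc n"] vT
      by (cases "Suc n = m \<or> Suc n = Suc m") auto
    ultimately have nm: "n = m" by auto
    have "(1 + hh (Suc n)) * (u - 2 * real n - 2) = (1 + hh (Suc n)) * (v - 2 * real n - 2)"
      using psi_T[of n u] psi_T[of n v] uT vT nm P[of "Suc n"] by simp
    then show ?thesis using hh_pos[of "Suc n"] by simp
  qed
next
  assume u1: "u \<le> 1"
  show ?thesis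
  proof (rule piece_cases[OF v])
    fix m assume "2 * real m + 1 \<le> v" "v \<le> 2 * real m + 2"
    then show ?thesis using end_inj_aux[OF v u X[symmetric]] P by metis
  next
    fix m assume vT: "2 * real m + 2 < v" "v < 2 * real m + 3"
    have "psi (Suc m) u > 0" using psi_T_pos[OF vT] P by simp
    then show ?thesis using psi_Z_other[of u "Suc m"] u u1 by simp
  next
    assume v1: "v \<le> 1"
    have c: "3 \<le> cc A 0" by (rule cc_ge3)
    have "u * (cc A 0 - 1) = v * (cc A 0 - 1)" using X XX_0[of u A] XX_0[of v A] u v u1 v1 by simp
    then show ?thesis using c by (simp add: mult_right_cancel)
  qed
qed

definition FF :: "nat set \<Rightarrow> real \<Rightarrow> real \<times> (real \<Rightarrow>\<^sub>C real)" where
  "FF A t = (if 0 \<le> t then (t, 0) else (XX A (- t), Phi (- t)))"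

lemma FF_pos: "0 \<le> t \<Longrightarrow> FF A t = (t, 0)" by (simp add: FF_def)
lemma FF_neg: "t \<le> 0 \<Longrightarrow> FF A t = (XX A (- t), Phi (- t))" by (simp add: FF_def)

lemma FF_inj: "inj (FF A)"
proof (rule injI)
  fix s t assume e: "FF A s = FF A t"
  show "s = t"
  proof (cases "0 \<le> s"; cases "0 \<le> t")
    assume "0 \<le> s" "0 \<le> t" then show ?thesis using e by (simp add: FF_def)
  next
    assume "0 \<le> s" "\<not> 0 \<le> t" then show ?thesis using e Phi_nonzero[of "-t"] by (simp add: FF_def)
  next
    assume "\<not> 0 \<le> s" "0 \<le> t" then show ?thesis using e Phi_nonzero[of "-s"] by (simp add: FF_def)
  next
    assume a: "\<not> 0 \<le> s" "\<not> 0 \<le> t"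
    then have "XX A (-s) = XX A (-t)" "Phi (-s) = Phi (-t)" using e by (simp_all add: FF_def)
    then have "\<And>k. psi k (-s) = psi k (-t)" by (metis Phi_apply phif_nat)
    then have "-s = -t" using end_inj[of "-s" "-t" A] a \<open>XX A (-s) = XX A (-t)\<close> by simp
    then show ?thesis by simp
  qed
qed

lemma FF_cont: "continuous_on UNIV (FF A)"
proof -
  have 1: "continuous_on {0..} (FF A)"
  proof -
    have "continuous_on {0..} (\<lambda>t::real. (t, 0::real \<Rightarrow>\<^sub>C real))" by (intro continuous_intros)
    then show ?thesis by (rule continuous_on_cong[THEN iffD1, rotated 2]) (auto simp: FF_def)
  qed
  have 2: "continuous_on {..0} (FF A)"
  proof -
    have a: "continuous_on {..0} (\<lambda>t::real. XX A (- t))"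
      by (rule continuous_on_compose2[OF XX_cont]) (auto intro: continuous_intros)
    have b: "continuous_on {..0} (\<lambda>t::real. Phi (- t))"
      by (rule continuous_on_compose2[OF continuous_Phi]) (auto intro: continuous_intros)
    have "continuous_on {..0} (\<lambda>t. (XX A (- t), Phi (- t)))" using a b by (intro continuous_intros)
    then show ?thesis by (rule continuous_on_cong[THEN iffD1, rotated 2]) (auto simp: FF_def)
  qed
  have "continuous_on ({..0} \<union> {0..}) (FF A)" using 1 2 by (intro continuous_on_closed_Un) auto
  moreover have "{..0} \<union> {0..} = (UNIV :: real set)" by auto
  ultimately show ?thesis by simp
qed

lemma dist_Pair_le: "dist (a, b) (c, d) \<le> dist a c + dist b d"
  unfolding dist_Pair_Pair using sqrt_sum_squares_le_sum[of "dist a c" "dist b d"] by simp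

lemma dist_coord_le: "\<bar>apply_bcontfun (snd x) n - apply_bcontfun (snd y) n\<bar> \<le> dist x (y :: real \<times> (real \<Rightarrow>\<^sub>C real))"
  using dist_bounded[of "snd x" n "snd y"] dist_snd_le[of x y] by (simp add: dist_real_def)

lemma dist_fst_le': "\<bar>fst x - fst y\<bar> \<le> dist x (y :: real \<times> (real \<Rightarrow>\<^sub>C real))"
  using dist_fst_le[of x y] by (simp add: dist_real_def)

lemma fst_FF_nonneg: "0 \<le> fst (FF A t)"
  by (auto simp: FF_def intro: XX_nonneg)

lemma FF_closed: "closed (range (FF A))"
proof -
  have "closure (range (FF A)) \<subseteq> range (FF A)"
  proof
    fix z assume z: "z \<in> closure (range (FF A))"
    obtain a g where zag: "z = (a, g)" by fastforce
    show "z \<in> range (FF A)"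
    proof (cases "g = 0")
      case False
      then obtain y0 where gn: "apply_bcontfun g y0 \<noteq> 0"
        using bcontfun_eqI[of g 0] by auto
      define n where "n = nat (round y0)"
      define e where "e = \<bar>apply_bcontfun g y0\<bar>"
      have e0: "0 < e" using gn by (simp add: e_def)
      have sub: "ball z e \<inter> range (FF A) \<subseteq> FF A ` {- (2 * real n + 3) .. 0}"
      proof
        fix y assume y: "y \<in> ball z e \<inter> range (FF A)"
        then obtain t where t: "y = FF A t" by auto
        have dy: "dist z y < e" using y by auto
        have coord: "\<bar>apply_bcontfun g y0 - apply_bcontfun (snd y) y0\<bar> < e"
          using dist_coord_le[of z y0 y] dy zag by simp
        have "t < 0"
        proof (rule ccontr)
          assume "\<not> t < 0"
          then have "snd y = 0" using t by (simp add: FF_def)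
          then show False using coord by (simp add: e_def)
        qed
        moreover have "- (2 * real n + 3) \<le> t"
        proof (rule ccontr)
          assume "\<not> - (2 * real n + 3) \<le> t"
          then have "psi n (-t) = 0" by (intro psi_zero) auto
          then have "apply_bcontfun (snd y) y0 = 0" using t \<open>t < 0\<close> by (simp add: FF_def phif_zero n_def)
          then show False using coord by (simp add: e_def)
        qed
        ultimately show "y \<in> FF A ` {- (2 * real n + 3) .. 0}" using t by auto
      qed
      have cpt: "compact (FF A ` {- (2 * real n + 3) .. 0})"
        by (rule compact_continuous_image) (auto intro: continuous_on_subset[OF FF_cont])
      have "z \<in> ball z e \<inter> closure (range (FF A))" using z e0 by simp
      also have "\<dots> \<subseteq> closure (ball z e \<inter> range (FF A))" by (rule open_Int_closure_subset) simp
      also have "\<dots> \<subseteq> closure (FF A ` {- (2 * real n + 3) .. 0})" by (rule closure_mono[OF sub])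
      also have "\<dots> = FF A ` {- (2 * real n + 3) .. 0}" using cpt by (simp add: compact_imp_closed)
      finally show ?thesis by auto
    next
      case True
      show ?thesis
      proof (cases "0 \<le> a")
        case True
        then have "z = FF A a" using \<open>g = 0\<close> zag by (simp add: FF_def)
        then show ?thesis by simp
      next
        case False
        obtain y where y: "y \<in> range (FF A)" "dist y z < - a"
          using z False unfolding closure_approachable by (meson neg_0_less_iff_less not_le)
        then obtain t where t: "y = FF A t" by auto
        have "\<bar>fst y - fst z\<bar> \<le> dist y z" by (rule dist_fst_le')
        moreover have "0 \<le> fst y" using t fst_FF_nonneg by simp
        ultimately show ?thesis using y zag False by simp
      qed
    qed
  qed
  then show ?thesis by (simp add: closure_subset_eq)
qed

definition TT :: "nat set \<Rightarrow> real topology" where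
  "TT A = pullback_topology UNIV (FF A) euclidean"

lemma openin_TT: "openin (TT A) U \<longleftrightarrow> (\<exists>V. open V \<and> U = FF A -` V)"
  by (simp add: TT_def openin_pullback_topology)

lemma topspace_TT[simp]: "topspace (TT A) = UNIV"
  by (simp add: TT_def topspace_pullback_topology)

lemma TT_open: "openin (TT A) U \<Longrightarrow> open U"
  unfolding openin_TT using open_vimage FF_cont by blast

lemma TT_ball_open: "openin (TT A) {s. dist (FF A s) (FF A p) < r}"
proof -
  have "{s. dist (FF A s) (FF A p) < r} = FF A -` ball (FF A p) r" by (auto simp: dist_commute)
  then show ?thesis unfolding openin_TT by blast
qed

lemma TT_nbhd:
  assumes "openin (TT A) U" "p \<in> U"
  shows "\<exists>r>0. \<forall>s. dist (FF A s) (FF A p) < r \<longrightarrow> s \<in> U"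
proof -
  obtain V where V: "open V" "U = FF A -` V" using assms(1) openin_TT by blast
  then have "FF A p \<in> V" using assms(2) by auto
  then obtain r where "r > 0" "ball (FF A p) r \<subseteq> V" using V(1) open_contains_ball by blast
  then show ?thesis using V by (intro exI[of _ r]) (auto simp: dist_commute)
qed

lemma cont_id_TT: "continuous_map euclidean (TT A) id"
  unfolding continuous_map_def using TT_open by auto

lemma cont_FF_TT: "continuous_map (TT A) euclidean (FF A)"
  unfolding continuous_map_def openin_TT by auto

lemma homeo_FF: "homeomorphic_map (TT A) (top_of_set (range (FF A))) (FF A)"
proof (rule bijective_open_imp_homeomorphic_map)
  show "continuous_map (TT A) (top_of_set (range (FF A))) (FF A)"
    using cont_FF_TT by (simp add: continuous_map_in_subtopology image_subset_iff)
  show "open_map (TT A) (top_of_set (range (FF A))) (FF A)"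
    unfolding open_map_def
  proof (intro allI impI)
    fix U assume "openin (TT A) U"
    then obtain V where V: "open V" "U = FF A -` V" using openin_TT by blast
    then have "FF A ` U = range (FF A) \<inter> V" by auto
    then show "openin (top_of_set (range (FF A))) (FF A ` U)"
      using V(1) by (auto simp: openin_subtopology_alt intro: exI[of _ V])
  qed
  show "FF A ` topspace (TT A) = topspace (top_of_set (range (FF A)))" by simp
  show "inj_on (FF A) (topspace (TT A))" using FF_inj by (simp add: inj_on_def inj_def)
qed

lemma TT_homeomorphic: "TT A homeomorphic_space top_of_set (range (FF A))"
  using homeo_FF homeomorphic_space by blast

lemma TT_Hausdorff: "Hausdorff_space (TT A)"
  using homeomorphic_Hausdorff_space[OF TT_homeomorphic]
  by (simp add: Hausdorff_space_subtopology)

lemma TT_cms: "completely_metrizable_space (TT A)"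
proof -
  have "closedin euclidean (range (FF A))" using FF_closed by simp
  then have "completely_metrizable_space (top_of_set (range (FF A)))"
    by (rule completely_metrizable_space_closedin[OF completely_metrizable_space_euclidean])
  then show ?thesis using homeomorphic_completely_metrizable_space[OF TT_homeomorphic] by simp
qed

lemma Vpt:
  fixes th :: real and m :: nat and A :: "nat set"
  assumes th: "0 \<le> th" "th \<le> 1"
  shows "XX A (2 * real m + 3/2 + th / 2) = cc A m + th"
    "psi m (2 * real m + 3/2 + th / 2) = hh m + th"
    "\<And>k. k \<noteq> m \<Longrightarrow> psi k (2 * real m + 3/2 + th / 2) = 0"
    "dist (Phi (2 * real m + 3/2 + th / 2)) 0 \<le> hh m + th"
    "FF A (- (2 * real m + 3/2 + th / 2)) = (XX A (2 * real m + 3/2 + th / 2), Phi (2 * real m + 3/2 + th / 2))"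
proof -
  define u where "u = 2 * real m + 3/2 + th / 2"
  have u: "2 * real m + 1 \<le> u" "u \<le> 2 * real m + 2" using th by (auto simp: u_def)
  show "XX A (2 * real m + 3/2 + th / 2) = cc A m + th" using XX_V[OF u, of A] by (simp add: u_def)
  have pm: "psi m u = hh m + th" using psi_V[OF u] th by (simp add: u_def)
  then show "psi m (2 * real m + 3/2 + th / 2) = hh m + th" by (simp add: u_def)
  have pk: "\<And>k. k \<noteq> m \<Longrightarrow> psi k u = 0" using psi_V_other[OF u] by blast
  then show "\<And>k. k \<noteq> m \<Longrightarrow> psi k (2 * real m + 3/2 + th / 2) = 0" by (simp add: u_def)
  have "dist (Phi u) 0 \<le> hh m + th"
  proof (rule dist_bound)
    fix y
    have "\<bar>phif u y\<bar> \<le> psi (nat (round y)) u" by (rule phif_abs_le)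
    also have "\<dots> \<le> hh m + th" using pm pk hh_pos[of m] th by (cases "nat (round y) = m") auto
    finally show "dist (apply_bcontfun (Phi u) y) (apply_bcontfun 0 y) \<le> hh m + th"
      by (simp add: dist_real_def)
  qed
  then show "dist (Phi (2 * real m + 3/2 + th / 2)) 0 \<le> hh m + th" by (simp add: u_def)
  have "FF A (- u) = (XX A u, Phi u)" using FF_neg[of "- u" A] u by simp
  then show "FF A (- (2 * real m + 3/2 + th / 2)) = (XX A (2 * real m + 3/2 + th / 2), Phi (2 * real m + 3/2 + th / 2))"
    unfolding u_def .
qed

lemma dist_FF_line: "0 \<le> s \<Longrightarrow> 0 \<le> k \<Longrightarrow> dist (FF A s) (FF A k) = \<bar>s - k\<bar>"
  by (simp add: FF_def dist_Pair_Pair dist_real_def)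

lemma dist_Vpt_line:
  assumes th: "0 \<le> th" "th \<le> 1" and k: "0 \<le> k"
  shows "dist (FF A (- (2 * real m + 3/2 + th / 2))) (FF A k) \<le> \<bar>cc A m - k\<bar> + th + hh m + th"
proof -
  let ?u = "2 * real m + 3/2 + th / 2"
  have "dist (FF A (- ?u)) (FF A k) = dist (XX A ?u, Phi ?u) (k, 0)"
    using Vpt(5)[OF th, where m=m and A=A] k by (simp add: FF_def)
  also have "\<dots> \<le> dist (XX A ?u) k + dist (Phi ?u) 0" by (rule dist_Pair_le)
  also have "\<dots> \<le> \<bar>cc A m - k\<bar> + th + (hh m + th)"
    using Vpt(1)[OF th, where m=m and A=A] Vpt(4)[OF th, where m=m] th by (auto simp: dist_real_def)
  finally show ?thesis by simp
qed

lemma hh_small: "0 < e \<Longrightarrow> \<exists>M. \<forall>m\<ge>M. hh m < e"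
proof -
  assume e: "0 < e"
  obtain M where M: "inverse (real (Suc M)) < e" using reals_Archimedean[OF e] by blast
  have "hh m < e" if "m \<ge> M" for m
  proof -
    have "hh m = inverse (real (Suc m))" by (simp add: hh_def field_simps)
    also have "\<dots> \<le> inverse (real (Suc M))" using that by (simp add: le_imp_inverse_le)
    finally show ?thesis using M by simp
  qed
  then show ?thesis by blast
qed

lemma far_left:
  assumes t: "t \<notin> KK A"
  shows "\<exists>L \<rho>. 0 < \<rho> \<and> (\<forall>s\<le> - L. \<rho> \<le> dist (FF A s) (FF A t))"
proof (cases "snd (FF A t) = 0")
  case False
  then have t0: "t < 0" by (cases "0 \<le> t") (auto simp: FF_def)
  then have sz: "snd (FF A t) = Phi (- t)" by (simp add: FF_def)
  obtain y0 where y0: "phif (- t) y0 \<noteq> 0" using False sz bcontfun_eqI[of "Phi (-t)" 0] by auto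
  define n0 where "n0 = nat (round y0)"
  have "psi n0 (- t) \<noteq> 0" using y0 phif_zero n0_def by metis
  define \<rho> where "\<rho> = \<bar>phif (- t) y0\<bar>"
  have "\<forall>s \<le> - (2 * real n0 + 3). \<rho> \<le> dist (FF A s) (FF A t)"
  proof (intro allI impI)
    fix s assume s: "s \<le> - (2 * real n0 + 3)"
    then have "psi n0 (- s) = 0" by (intro psi_zero) auto
    then have "phif (- s) y0 = 0" using phif_zero n0_def by metis
    moreover have "snd (FF A s) = Phi (- s)" using s by (simp add: FF_def)
    moreover have "\<bar>apply_bcontfun (snd (FF A s)) y0 - apply_bcontfun (snd (FF A t)) y0\<bar> \<le> dist (FF A s) (FF A t)"
      by (rule dist_coord_le)
    ultimately show "\<rho> \<le> dist (FF A s) (FF A t)" using sz by (simp add: \<rho>_def)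
  qed
  moreover have "0 < \<rho>" using y0 by (simp add: \<rho>_def)
  ultimately show ?thesis by blast
next
  case True
  have t0: "0 \<le> t"
  proof (rule ccontr)
    assume "\<not> 0 \<le> t"
    then have "snd (FF A t) = Phi (- t)" "Phi (- t) \<noteq> 0" using Phi_nonzero[of "-t"] by (auto simp: FF_def)
    then show False using True by simp
  qed
  have Ft: "FF A t = (t, 0)" using t0 by (simp add: FF_def)
  have oK: "open (- KK A)" using KK_closed[of A] by (simp add: open_Compl)
  have tK: "t \<in> - KK A" using t by simp
  obtain \<delta> where \<delta>: "0 < \<delta>" "ball t \<delta> \<subseteq> - KK A"
    using oK tK open_contains_ball by blast
  have dm: "\<delta> \<le> \<bar>cc A m - t\<bar>" for m
  proof (rule ccontr)
    assume "\<not> \<delta> \<le> \<bar>cc A m - t\<bar>"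
    then have "cc A m \<in> ball t \<delta>" by (simp add: dist_real_def abs_minus_commute)
    then show False using \<delta>(2) cc_in_KK[of A m] by blast
  qed
  define \<rho> where "\<rho> = min (\<delta>/2) (1/2)"
  have "\<forall>s \<le> - 1. \<rho> \<le> dist (FF A s) (FF A t)"
  proof (intro allI impI)
    fix s :: real assume s: "s \<le> - 1"
    define u where "u = - s"
    have u: "1 \<le> u" using s by (simp add: u_def)
    have Fs: "FF A s = (XX A u, Phi u)" using s by (simp add: FF_def u_def)
    have d1: "\<bar>XX A u - t\<bar> \<le> dist (FF A s) (FF A t)"
      using dist_fst_le'[of "FF A s" "FF A t"] Fs Ft by simp
    have d2: "\<bar>psi k u\<bar> \<le> dist (FF A s) (FF A t)" for k
    proof -
      have "\<bar>apply_bcontfun (snd (FF A s)) (real k) - apply_bcontfun (snd (FF A t)) (real k)\<bar> \<le> dist (FF A s) (FF A t)"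
        by (rule dist_coord_le)
      then show ?thesis using Fs Ft by simp
    qed
    show "\<rho> \<le> dist (FF A s) (FF A t)"
    proof (rule piece_cases[of u])
      show "0 < u" using u by simp
    next
      assume "u \<le> 1"
      then have u1: "2 * real 0 + 1 \<le> u" "u \<le> 2 * real 0 + 2" using u by auto
      have "psi 0 u = hh 0 + \<bar>2 * u - 4 * real 0 - 3\<bar>" by (rule psi_V[OF u1])
      moreover have "XX A u = cc A 0 + (2 * u - 4 * real 0 - 3)" by (rule XX_V[OF u1])
      ultimately have "\<bar>XX A u - cc A 0\<bar> \<le> \<bar>psi 0 u\<bar>" using hh_pos[of 0] by simp
      then have "\<delta> \<le> 2 * dist (FF A s) (FF A t)" using d1 d2[of 0] dm[of 0] by linarith
      then show ?thesis by (simp add: \<rho>_def)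
    next
      fix n assume u1: "2 * real n + 1 \<le> u" "u \<le> 2 * real n + 2"
      have "psi n u = hh n + \<bar>2 * u - 4 * real n - 3\<bar>" by (rule psi_V[OF u1])
      moreover have "XX A u = cc A n + (2 * u - 4 * real n - 3)" by (rule XX_V[OF u1])
      ultimately have "\<bar>XX A u - cc A n\<bar> \<le> \<bar>psi n u\<bar>" using hh_pos[of n] by simp
      then have "\<delta> \<le> 2 * dist (FF A s) (FF A t)" using d1 d2[of n] dm[of n] by linarith
      then show ?thesis by (simp add: \<rho>_def)
    next
      fix n assume u1: "2 * real n + 2 < u" "u < 2 * real n + 3"
      have a: "psi n u = (1 + hh n) * (2 * real n + 3 - u)" using psi_down[of n u] u1 by simp
      have b: "psi (Suc n) u = (1 + hh (Suc n)) * (u - 2 * real n - 2)" using psi_T[of n u] u1 by simp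
      have "(1 + hh n) * (2 * real n + 3 - u) \<ge> 1 * (2 * real n + 3 - u)"
        using hh_pos[of n] u1 by (intro mult_right_mono) auto
      moreover have "(1 + hh (Suc n)) * (u - 2 * real n - 2) \<ge> 1 * (u - 2 * real n - 2)"
        using hh_pos[of "Suc n"] u1 by (intro mult_right_mono) auto
      ultimately have "psi n u + psi (Suc n) u \<ge> 1" using a b by simp
      then have "1/2 \<le> dist (FF A s) (FF A t)" using d2[of n] d2[of "Suc n"] by linarith
      then show ?thesis by (simp add: \<rho>_def)
    qed
  qed
  moreover have "0 < \<rho>" using \<delta> by (simp add: \<rho>_def)
  ultimately show ?thesis by blast
qed

lemma local_inverse:
  assumes t: "t \<notin> KK A" and e: "0 < e"
  shows "\<exists>r>0. \<forall>s. dist (FF A s) (FF A t) < r \<longrightarrow> \<bar>s - t\<bar> < e"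
proof -
  obtain L \<rho> where L: "0 < \<rho>" "\<forall>s\<le> - L. \<rho> \<le> dist (FF A s) (FF A t)"
    using far_left[OF t] by blast
  define R where "R = \<bar>t\<bar> + \<bar>fst (FF A t)\<bar> + 2"
  have right: "1 \<le> dist (FF A s) (FF A t)" if "R \<le> s" for s
  proof -
    have "0 \<le> s" using that by (simp add: R_def)
    then have "fst (FF A s) = s" by (simp add: FF_def)
    then show ?thesis using dist_fst_le'[of "FF A s" "FF A t"] that by (simp add: R_def)
  qed
  define C where "C = {- L .. R} - ball t e"
  have cC: "compact C" unfolding C_def by (intro compact_diff) auto
  obtain r3 where r3: "0 < r3" "\<forall>s\<in>C. r3 \<le> dist (FF A s) (FF A t)"
  proof (cases "C = {}")
    case True then show ?thesis using that[of 1] by simp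
  next
    case False
    have "continuous_on C (\<lambda>s. dist (FF A s) (FF A t))"
      by (intro continuous_intros continuous_on_subset[OF FF_cont]) auto
    then obtain s0 where s0: "s0 \<in> C" "\<forall>s\<in>C. dist (FF A s0) (FF A t) \<le> dist (FF A s) (FF A t)"
      using continuous_attains_inf[OF cC False] by blast
    have "s0 \<noteq> t" using s0(1) e by (auto simp: C_def)
    then have "FF A s0 \<noteq> FF A t" using FF_inj[of A] by (auto simp: inj_def)
    then have "0 < dist (FF A s0) (FF A t)" by simp
    then show ?thesis using that s0 by blast
  qed
  define r where "r = min (min \<rho> 1) r3"
  have "0 < r" using L r3 by (simp add: r_def)
  moreover have "\<bar>s - t\<bar> < e" if d: "dist (FF A s) (FF A t) < r" for s
  proof (rule ccontr)
    assume "\<not> \<bar>s - t\<bar> < e"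
    then have st: "s \<notin> ball t e" by (simp add: dist_real_def)
    have "s \<le> - L \<or> R \<le> s \<or> s \<in> C" using st unfolding C_def by auto
    then consider "s \<le> - L" | "R \<le> s" | "s \<in> C" by blast
    then show False
    proof cases
      case 1
      then have "\<rho> \<le> dist (FF A s) (FF A t)" using L(2) by blast
      moreover have "r \<le> \<rho>" by (simp add: r_def)
      ultimately show False using d by linarith
    next
      case 2
      then have "1 \<le> dist (FF A s) (FF A t)" using right by blast
      moreover have "r \<le> 1" by (simp add: r_def)
      ultimately show False using d by linarith
    next
      case 3
      then have "r3 \<le> dist (FF A s) (FF A t)" using r3(2) by blast
      moreover have "r \<le> r3" by (simp add: r_def)
      ultimately show False using d by linarith
    qed
  qed
  ultimately show ?thesis by blast
qed

definition lc_at :: "'a topology \<Rightarrow> 'a \<Rightarrow> bool" where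
  "lc_at X p \<longleftrightarrow> (\<exists>U C. openin X U \<and> compactin X C \<and> p \<in> U \<and> U \<subseteq> C)"

lemma compact_TT: "compact S \<Longrightarrow> compactin (TT A) S"
  using image_compactin[OF _ cont_id_TT, of S A] by (simp add: compactin_euclidean_iff)

lemma lc_off_K: assumes t: "t \<notin> KK A" shows "lc_at (TT A) t"
proof -
  obtain r where r: "0 < r" "\<forall>s. dist (FF A s) (FF A t) < r \<longrightarrow> \<bar>s - t\<bar> < 1"
    using local_inverse[OF t, of 1] by auto
  let ?U = "{s. dist (FF A s) (FF A t) < r}"
  have "openin (TT A) ?U" by (rule TT_ball_open)
  moreover have "compactin (TT A) {t - 1 .. t + 1}" by (rule compact_TT) simp
  moreover have "t \<in> ?U" using r by simp
  moreover have "?U \<subseteq> {t - 1 .. t + 1}"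
  proof
    fix x assume "x \<in> ?U"
    then have "\<bar>x - t\<bar> < 1" using r by auto
    then show "x \<in> {t - 1 .. t + 1}" by auto
  qed
  ultimately show ?thesis unfolding lc_at_def by blast
qed

lemma not_lc_K: assumes k: "k \<in> KK A" shows "\<not> lc_at (TT A) k"
proof
  assume "lc_at (TT A) k"
  then obtain U C where UC: "openin (TT A) U" "compactin (TT A) C" "k \<in> U" "U \<subseteq> C"
    unfolding lc_at_def by blast
  obtain r0 where r0: "0 < r0" "\<forall>s. dist (FF A s) (FF A k) < r0 \<longrightarrow> s \<in> U"
    using TT_nbhd[OF UC(1,3)] by blast
  define r where "r = min r0 1"
  have r: "0 < r" "r \<le> 1" "r \<le> r0" using r0 by (auto simp: r_def)
  have k0: "0 \<le> k" using KK_ge3[OF k] by simp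
  have cpt: "compact (FF A ` C)"
    using image_compactin[OF UC(2) cont_FF_TT] by (simp add: compactin_euclidean_iff)
  obtain M0 where M0: "\<forall>m\<ge>M0. hh m < r/4" using hh_small[of "r/4"] r by auto
  define I where "I = {m. M0 \<le> m \<and> \<bar>cc A m - k\<bar> < r/4}"
  have infI: "infinite I"
    unfolding infinite_nat_iff_unbounded_le
  proof
    fix M
    have r4: "0 < r/4" using r by simp
    obtain m where m: "m \<ge> max M M0" "\<bar>cc A m - k\<bar> < r/4" using cc_dense[OF k r4, of "max M M0"] by blast
    then have "m \<ge> M" "m \<in> I" unfolding I_def by auto
    then show "\<exists>m\<ge>M. m \<in> I" by blast
  qed
  define th where "th = (\<lambda>m. r/4 - hh m)"
  have th: "0 \<le> th m" "th m \<le> 1" if "m \<in> I" for m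
  proof -
    have "M0 \<le> m" using that by (simp add: I_def)
    then have "hh m < r/4" using M0 by blast
    then show "0 \<le> th m" "th m \<le> 1" using hh_pos[of m] r unfolding th_def by linarith+
  qed
  define P where "P = (\<lambda>m. FF A (- (2 * real m + 3/2 + th m / 2)))"
  have Pin: "P m \<in> FF A ` C" if "m \<in> I" for m
  proof -
    have "dist (P m) (FF A k) \<le> \<bar>cc A m - k\<bar> + th m + hh m + th m"
      unfolding P_def by (rule dist_Vpt_line[OF th[OF that] k0])
    also have "\<dots> < r"
    proof -
      have "\<bar>cc A m - k\<bar> < r/4" "0 < hh m" using that hh_pos[of m] by (auto simp: I_def)
      then show ?thesis unfolding th_def by linarith
    qed
    finally have "dist (FF A (- (2 * real m + 3/2 + th m / 2))) (FF A k) < r0" using r(3) unfolding P_def by linarith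
    then have "- (2 * real m + 3/2 + th m / 2) \<in> U" using r0(2) by blast
    then show ?thesis using UC(4) unfolding P_def by blast
  qed
  have sep: "r/4 \<le> dist (P m) (P m')" if "m \<in> I" "m' \<in> I" "m \<noteq> m'" for m m'
  proof -
    have a: "psi m (2 * real m + 3/2 + th m / 2) = hh m + th m" by (rule Vpt(2)[OF th[OF that(1)]])
    have b: "psi m (2 * real m' + 3/2 + th m' / 2) = 0" using Vpt(3)[OF th[OF that(2)]] that(3) by simp
    have "\<bar>apply_bcontfun (snd (P m)) (real m) - apply_bcontfun (snd (P m')) (real m)\<bar> \<le> dist (P m) (P m')"
      by (rule dist_coord_le)
    moreover have "snd (P m) = Phi (2 * real m + 3/2 + th m / 2)" "snd (P m') = Phi (2 * real m' + 3/2 + th m' / 2)"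
      unfolding P_def using Vpt(5)[OF th[OF that(1)]] Vpt(5)[OF th[OF that(2)]] by simp_all
    ultimately show ?thesis using a b by (simp add: th_def)
  qed
  have injP: "inj_on P I"
  proof (rule inj_onI)
    fix x y assume xy: "x \<in> I" "y \<in> I" "P x = P y"
    show "x = y"
    proof (rule ccontr)
      assume "x \<noteq> y"
      then have "r/4 \<le> dist (P x) (P y)" using sep xy by blast
      then show False using xy(3) r(1) by simp
    qed
  qed
  have fin: "infinite (P ` I)"
  proof
    assume "finite (P ` I)"
    then have "finite I" by (rule finite_imageD[OF _ injP])
    then show False using infI by contradiction
  qed
  have sub: "P ` I \<subseteq> FF A ` C"
  proof
    fix p assume "p \<in> P ` I"
    then obtain m where "m \<in> I" "p = P m" by blast
    then show "p \<in> FF A ` C" using Pin by simp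
  qed
  obtain x where x: "x \<in> FF A ` C" "x islimpt (P ` I)"
    using Heine_Borel_imp_Bolzano_Weierstrass[OF cpt fin sub] by blast
  have r8: "0 < r/8" using r by simp
  obtain p1 where p1: "p1 \<in> P ` I" "p1 \<noteq> x" "dist p1 x < r/8"
    using x(2)[unfolded islimpt_approachable, rule_format, OF r8] by blast
  have dp1: "0 < dist p1 x" using p1(2) by simp
  obtain p2 where p2: "p2 \<in> P ` I" "p2 \<noteq> x" "dist p2 x < dist p1 x"
    using x(2)[unfolded islimpt_approachable, rule_format, OF dp1] by blast
  obtain m1 where m1: "m1 \<in> I" "p1 = P m1" using p1(1) by blast
  obtain m2 where m2: "m2 \<in> I" "p2 = P m2" using p2(1) by blast
  have "m1 \<noteq> m2"
  proof
    assume "m1 = m2"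
    then have "p1 = p2" using m1(2) m2(2) by simp
    then show False using p2(3) by simp
  qed
  then have "r/4 \<le> dist p1 p2" using sep[OF m1(1) m2(1)] m1(2) m2(2) by simp
  moreover have "dist p1 p2 \<le> dist p1 x + dist p2 x" by (rule dist_triangle2)
  ultimately show False using p1(3) p2(3) by linarith
qed

lemma K_in_closure_left:
  assumes k: "k \<in> KK A"
  shows "k \<in> TT A closure_of {s. s < M}"
  unfolding in_closure_of
proof (intro conjI allI impI)
  show "k \<in> topspace (TT A)" by simp
  fix U assume U: "k \<in> U \<and> openin (TT A) U"
  obtain r where r: "0 < r" "\<forall>s. dist (FF A s) (FF A k) < r \<longrightarrow> s \<in> U"
    using TT_nbhd U by blast
  have k0: "0 \<le> k" using KK_ge3[OF k] by simp
  obtain M0 where M0: "\<forall>m\<ge>M0. hh m < r/2" using hh_small[of "r/2"] r by auto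
  obtain N :: nat where N: "- M < real N" using reals_Archimedean2 by blast
  obtain m where m: "m \<ge> max M0 N" "\<bar>cc A m - k\<bar> < r/2" using cc_dense[OF k, of "r/2" "max M0 N"] r by auto
  have "dist (FF A (- (2 * real m + 3/2 + 0 / 2))) (FF A k) \<le> \<bar>cc A m - k\<bar> + 0 + hh m + 0"
    by (rule dist_Vpt_line) (use k0 in auto)
  also have "\<dots> < r" using m M0 by force
  finally have "- (2 * real m + 3/2) \<in> U" using r by simp
  moreover have "- (2 * real m + 3/2) < M" using m N by linarith
  ultimately show "\<exists>y. y \<in> {s. s < M} \<and> y \<in> U" by blast
qed

definition NL :: "'a topology \<Rightarrow> 'a set" where "NL X = {p \<in> topspace X. \<not> lc_at X p}"

lemma lc_at_image:
  assumes h: "homeomorphic_map X Y f" and lc: "lc_at X p"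
  shows "lc_at Y (f p)"
proof -
  obtain U C where UC: "openin X U" "compactin X C" "p \<in> U" "U \<subseteq> C"
    using lc unfolding lc_at_def by blast
  have "openin Y (f ` U)" using homeomorphic_imp_open_map[OF h] UC(1) unfolding open_map_def by blast
  moreover have "compactin Y (f ` C)" using image_compactin[OF UC(2) homeomorphic_imp_continuous_map[OF h]] .
  moreover have "f p \<in> f ` U" "f ` U \<subseteq> f ` C" using UC by auto
  ultimately show ?thesis unfolding lc_at_def by blast
qed

lemma hinv:
  assumes "homeomorphic_map X Y f"
  obtains g where "homeomorphic_map Y X g" "\<And>x. x \<in> topspace X \<Longrightarrow> g (f x) = x"
    "\<And>y. y \<in> topspace Y \<Longrightarrow> f (g y) = y"
proof -
  obtain g where g: "homeomorphic_maps X Y f g" using assms homeomorphic_map_maps by blast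
  then show ?thesis using that homeomorphic_maps_map[of X Y f g] by blast
qed

lemma NL_image:
  assumes h: "homeomorphic_map X Y f"
  shows "f ` NL X = NL Y"
proof -
  obtain g where g: "homeomorphic_map Y X g" "\<And>x. x \<in> topspace X \<Longrightarrow> g (f x) = x"
    "\<And>y. y \<in> topspace Y \<Longrightarrow> f (g y) = y" using hinv[OF h] by blast
  have fX: "f ` topspace X = topspace Y" by (rule homeomorphic_imp_surjective_map[OF h])
  have gY: "g ` topspace Y = topspace X" by (rule homeomorphic_imp_surjective_map[OF g(1)])
  show ?thesis
  proof
    show "f ` NL X \<subseteq> NL Y"
    proof
      fix q assume "q \<in> f ` NL X"
      then obtain p where p: "p \<in> topspace X" "\<not> lc_at X p" "q = f p" by (auto simp: NL_def)
      have "q \<in> topspace Y" using p fX by blast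
      moreover have "\<not> lc_at Y q"
      proof
        assume "lc_at Y q"
        then have "lc_at X (g q)" by (rule lc_at_image[OF g(1)])
        then show False using p g(2) by simp
      qed
      ultimately show "q \<in> NL Y" by (simp add: NL_def)
    qed
  next
    show "NL Y \<subseteq> f ` NL X"
    proof
      fix q assume q: "q \<in> NL Y"
      then have qY: "q \<in> topspace Y" "\<not> lc_at Y q" by (auto simp: NL_def)
      have "g q \<in> topspace X" using qY gY by blast
      moreover have "\<not> lc_at X (g q)"
      proof
        assume "lc_at X (g q)"
        then have "lc_at Y (f (g q))" by (rule lc_at_image[OF h])
        then show False using qY g(3) by simp
      qed
      ultimately have "g q \<in> NL X" by (simp add: NL_def)
      moreover have "q = f (g q)" using g(3) qY by simp
      ultimately show "q \<in> f ` NL X" by blast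
    qed
  qed
qed

definition CS :: "'a topology \<Rightarrow> 'a set set" where
  "CS X = connected_components_of (subtopology X (NL X))"

lemma CS_image:
  assumes h: "homeomorphic_map X Y f"
  shows "CS Y = (image f) ` CS X"
proof -
  have "NL X \<subseteq> topspace X" by (auto simp: NL_def)
  then have "f ` (topspace X \<inter> NL X) = topspace Y \<inter> NL Y"
    using NL_image[OF h] by (auto simp: NL_def)
  then have "homeomorphic_map (subtopology X (NL X)) (subtopology Y (NL Y)) f"
    by (rule homeomorphic_map_subtopologies[OF h])
  then show ?thesis unfolding CS_def by (rule homeomorphic_map_connected_components_of)
qed

definition Adj :: "'a topology \<Rightarrow> 'a set \<Rightarrow> 'a set \<Rightarrow> bool" where
  "Adj X P Q \<longleftrightarrow> P \<noteq> Q \<and> (\<exists>S. connectedin X S \<and> S \<inter> NL X = {} \<and> X closure_of S \<inter> NL X \<subseteq> P \<union> Q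
       \<and> X closure_of S \<inter> P \<noteq> {} \<and> X closure_of S \<inter> Q \<noteq> {})"

lemma Adj_sym: "Adj X P Q \<Longrightarrow> Adj X Q P"
  unfolding Adj_def by blast

lemma Adj_image:
  assumes h: "homeomorphic_map X Y f" and P: "P \<subseteq> topspace X" and Q: "Q \<subseteq> topspace X"
    and adj: "Adj X P Q"
  shows "Adj Y (f ` P) (f ` Q)"
proof -
  obtain S where S: "connectedin X S" "S \<inter> NL X = {}" "X closure_of S \<inter> NL X \<subseteq> P \<union> Q"
    "X closure_of S \<inter> P \<noteq> {}" "X closure_of S \<inter> Q \<noteq> {}" and PQ: "P \<noteq> Q"
    using adj unfolding Adj_def by blast
  have inj: "inj_on f (topspace X)" by (rule homeomorphic_imp_injective_map[OF h])
  have St: "S \<subseteq> topspace X" by (rule connectedin_subset_topspace[OF S(1)])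
  have NLt: "NL X \<subseteq> topspace X" by (auto simp: NL_def)
  have clt: "X closure_of S \<subseteq> topspace X" by (rule closure_of_subset_topspace)
  have cl: "Y closure_of (f ` S) = f ` (X closure_of S)" by (rule homeomorphic_map_closure_of[OF h St])
  have NLY: "NL Y = f ` NL X" using NL_image[OF h] by simp
  have "f ` P \<noteq> f ` Q" using PQ inj_on_image_eq_iff[OF inj P Q] by simp
  moreover have "connectedin Y (f ` S)"
    by (rule connectedin_continuous_map_image[OF homeomorphic_imp_continuous_map[OF h] S(1)])
  moreover have "f ` S \<inter> NL Y = {}"
    unfolding NLY using inj_on_image_Int[OF inj St NLt] S(2) by simp
  moreover have "Y closure_of (f ` S) \<inter> NL Y \<subseteq> f ` P \<union> f ` Q"
    unfolding cl NLY using inj_on_image_Int[OF inj clt NLt] S(3) by blast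
  moreover have "Y closure_of (f ` S) \<inter> f ` P \<noteq> {}" unfolding cl using S(4) by blast
  moreover have "Y closure_of (f ` S) \<inter> f ` Q \<noteq> {}" unfolding cl using S(5) by blast
  ultimately show ?thesis unfolding Adj_def by blast
qed

lemma NL_TT: "NL (TT A) = KK A"
  unfolding NL_def using lc_off_K not_lc_K by auto

lemma sub_TT_eq:
  assumes loc: "\<And>w e. w \<in> S \<Longrightarrow> 0 < e \<Longrightarrow> \<exists>r>0. \<forall>s\<in>S. dist (FF A s) (FF A w) < r \<longrightarrow> \<bar>s - w\<bar> < e"
  shows "subtopology (TT A) S = top_of_set S"
proof (rule topology_eq[THEN iffD2], intro allI)
  fix W
  show "openin (subtopology (TT A) S) W \<longleftrightarrow> openin (top_of_set S) W"
  proof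
    assume "openin (subtopology (TT A) S) W"
    then obtain U where U: "openin (TT A) U" "W = U \<inter> S" by (auto simp: openin_subtopology)
    from U(1) have "open U" by (rule TT_open)
    then show "openin (top_of_set S) W" using U(2) by (auto simp: openin_subtopology)
  next
    assume "openin (top_of_set S) W"
    then obtain Ov where O: "open Ov" "W = Ov \<inter> S" by (auto simp: openin_subtopology)
    show "openin (subtopology (TT A) S) W"
      unfolding openin_subopen[of _ W]
    proof
      fix w assume w: "w \<in> W"
      then obtain e where e: "0 < e" "ball w e \<subseteq> Ov" using O open_contains_ball by blast
      obtain r where r: "0 < r" "\<forall>s\<in>S. dist (FF A s) (FF A w) < r \<longrightarrow> \<bar>s - w\<bar> < e"
        using loc[of w e] w O(2) e(1) by blast
      let ?V = "{s. dist (FF A s) (FF A w) < r} \<inter> S"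
      have "openin (subtopology (TT A) S) ?V" by (rule openin_subtopology_Int[OF TT_ball_open])
      moreover have "w \<in> ?V" using w O(2) r(1) by simp
      moreover have "?V \<subseteq> W"
      proof
        fix s assume s: "s \<in> ?V"
        then have "\<bar>s - w\<bar> < e" using r(2) by blast
        then have "s \<in> ball w e" by (simp add: dist_real_def abs_minus_commute)
        then show "s \<in> W" using s e(2) O(2) by blast
      qed
      ultimately show "\<exists>T. openin (subtopology (TT A) S) T \<and> w \<in> T \<and> T \<subseteq> W" by blast
    qed
  qed
qed

lemma sub_K: "subtopology (TT A) (KK A) = top_of_set (KK A)"
proof (rule sub_TT_eq)
  fix w e assume w: "w \<in> KK A" and e: "0 < (e::real)"
  show "\<exists>r>0. \<forall>s\<in>KK A. dist (FF A s) (FF A w) < r \<longrightarrow> \<bar>s - w\<bar> < e"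
  proof (intro exI[of _ e] conjI ballI impI)
    fix s assume "s \<in> KK A" "dist (FF A s) (FF A w) < e"
    then show "\<bar>s - w\<bar> < e" using dist_FF_line[of s w A] KK_ge3[of s A] KK_ge3[OF w] by simp
  qed (rule e)
qed

lemma sub_offK: "subtopology (TT A) (- KK A) = top_of_set (- KK A)"
proof (rule sub_TT_eq)
  fix w e assume w: "w \<in> - KK A" and e: "0 < (e::real)"
  then show "\<exists>r>0. \<forall>s\<in>- KK A. dist (FF A s) (FF A w) < r \<longrightarrow> \<bar>s - w\<bar> < e"
    using local_inverse[of w A e] by auto
qed

lemma KK_cases: "x \<in> KK A \<Longrightarrow> \<exists>j. x \<in> Cmp A j"
  by (auto simp: KK_def)

lemma Cmp_KK: "Cmp A i \<subseteq> KK A"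
  by (auto simp: KK_def)

lemma Cmp_bounds: assumes "x \<in> Cmp A j" shows "real (3*j+3) \<le> x \<and> x \<le> real (3*j+4)"
  using Cmp_sub[of A j] assms by auto

lemma Cmp_disj:
  assumes "i \<noteq> j" shows "Cmp A i \<inter> Cmp A j = {}"
proof (rule ccontr)
  assume "Cmp A i \<inter> Cmp A j \<noteq> {}"
  then obtain x where "x \<in> Cmp A i" "x \<in> Cmp A j" by blast
  then have "real (3*i+3) \<le> real (3*j+4)" "real (3*j+3) \<le> real (3*i+4)"
    using Cmp_bounds by (meson order.trans)+
  then have "3*i+3 \<le> 3*j+4" "3*j+3 \<le> 3*i+4" by (simp_all only: of_nat_le_iff)
  then show False using assms by arith
qed

lemma Cmp_inj: "Cmp A i = Cmp A j \<Longrightarrow> i = j"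
  using Cmp_disj[of i j A] Cmp_ne[of i A] by auto

lemma Cmp_conn: "connected (Cmp A i)"
  by (auto simp: Cmp_def)

lemma not_K_mid:
  assumes "real (3*i+4) < z" "z < real (3*i+6)" shows "z \<notin> KK A"
proof
  assume "z \<in> KK A"
  then obtain j where "z \<in> Cmp A j" using KK_cases by blast
  then have "real (3*j+3) \<le> z" "z \<le> real (3*j+4)" using Cmp_bounds by blast+
  then have "real (3*j+3) < real (3*i+6)" "real (3*i+4) < real (3*j+4)" using assms by linarith+
  then have "3*j+3 < 3*i+6" "3*i+4 < 3*j+4" by (simp_all only: of_nat_less_iff)
  then show False by arith
qed

lemma comp_K:
  assumes x: "x \<in> Cmp A i"
  shows "connected_component_of_set (top_of_set (KK A)) x = Cmp A i"
proof
  show "Cmp A i \<subseteq> connected_component_of_set (top_of_set (KK A)) x"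
    by (rule connected_component_of_maximal)
       (use x Cmp_conn[of A i] Cmp_KK[of A i] in \<open>auto simp: connectedin_subtopology connectedin_iff_connected\<close>)
next
  let ?C = "connected_component_of_set (top_of_set (KK A)) x"
  have "connectedin (top_of_set (KK A)) ?C" by (rule connectedin_connected_component_of)
  then have Cc: "connected ?C" "?C \<subseteq> KK A" by (auto simp: connectedin_subtopology connectedin_iff_connected)
  have "x \<in> KK A" using x Cmp_KK[of A i] by blast
  then have xC: "x \<in> ?C" by (simp add: connected_component_of_refl)
  show "?C \<subseteq> Cmp A i"
  proof
    fix y assume y: "y \<in> ?C"
    show "y \<in> Cmp A i"
    proof (rule ccontr)
      assume ny: "y \<notin> Cmp A i"
      obtain j where j: "y \<in> Cmp A j" using y Cc(2) KK_cases by blast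
      have ij: "i \<noteq> j" using ny j by auto
      have xb: "real (3*i+3) \<le> x" "x \<le> real (3*i+4)" using Cmp_bounds[OF x] by auto
      have yb: "real (3*j+3) \<le> y" "y \<le> real (3*j+4)" using Cmp_bounds[OF j] by auto
      show False
      proof (cases "i < j")
        case True
        then have "3*i+6 \<le> 3*j+3" by simp
        then have "real (3*i+6) \<le> real (3*j+3)" by (simp only: of_nat_le_iff)
        define z where "z = real (3*i) + 5"
        have "z \<in> {x..y}" using xb yb \<open>real (3*i+6) \<le> real (3*j+3)\<close> by (auto simp: z_def)
        then have "z \<in> ?C" using connected_contains_Icc[OF Cc(1) xC y] by blast
        moreover have "z \<notin> KK A" by (rule not_K_mid[of i]) (auto simp: z_def)
        ultimately show False using Cc(2) by blast
      next
        case False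
        then have "j < i" using ij by simp
        then obtain i' where i': "i = Suc i'" by (cases i) auto
        have "j \<le> i'" using \<open>j < i\<close> i' by simp
        then have "3*j+4 \<le> 3*i'+4" by simp
        then have "real (3*j+4) \<le> real (3*i'+4)" by (simp only: of_nat_le_iff)
        define z where "z = real (3*i') + 5"
        have "z \<in> {y..x}" using xb yb \<open>real (3*j+4) \<le> real (3*i'+4)\<close> i' by (auto simp: z_def)
        then have "z \<in> ?C" using connected_contains_Icc[OF Cc(1) y xC] by blast
        moreover have "z \<notin> KK A" by (rule not_K_mid[of i']) (auto simp: z_def)
        ultimately show False using Cc(2) by blast
      qed
    qed
  qed
qed

lemma comps_K: "connected_components_of (top_of_set (KK A)) = range (Cmp A)"
proof -
  have "connected_component_of_set (top_of_set (KK A)) ` KK A = range (Cmp A)"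
  proof
    show "connected_component_of_set (top_of_set (KK A)) ` KK A \<subseteq> range (Cmp A)"
      using comp_K KK_cases by blast
    show "range (Cmp A) \<subseteq> connected_component_of_set (top_of_set (KK A)) ` KK A"
    proof
      fix C assume "C \<in> range (Cmp A)"
      then obtain i where i: "C = Cmp A i" by blast
      have "real (3*i+3) \<in> KK A" using Cmp_ne Cmp_KK by blast
      moreover have "connected_component_of_set (top_of_set (KK A)) (real (3*i+3)) = C"
        using comp_K[OF Cmp_ne] i by simp
      ultimately show "C \<in> connected_component_of_set (top_of_set (KK A)) ` KK A" by blast
    qed
  qed
  then show ?thesis unfolding connected_components_of_def by simp
qed

lemma CS_TT: "CS (TT A) = range (Cmp A)"
  unfolding CS_def NL_TT sub_K comps_K ..

lemma cl_sub_Icc: "S \<subseteq> {a..b} \<Longrightarrow> TT A closure_of S \<subseteq> {a..b}"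
  by (rule closure_of_minimal)
     (auto intro: compactin_imp_closedin[OF TT_Hausdorff compact_TT])

lemma closure_sub: "closure S \<subseteq> TT A closure_of S"
proof
  fix x assume x: "x \<in> closure S"
  show "x \<in> TT A closure_of S"
    unfolding in_closure_of
  proof (intro conjI allI impI)
    show "x \<in> topspace (TT A)" by simp
    fix T assume T: "x \<in> T \<and> openin (TT A) T"
    then have "open T" using TT_open by blast
    then have "T \<inter> S \<noteq> {}" using open_Int_closure_eq_empty[of T S] x T by blast
    then show "\<exists>y. y \<in> S \<and> y \<in> T" by blast
  qed
qed

lemma Cmp_max: "(if i \<in> A then real (3*i+4) else real (3*i+3)) \<in> Cmp A i"
  by (auto simp: Cmp_def)

lemma Adj_TT_step: "Adj (TT A) (Cmp A i) (Cmp A (Suc i))"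
proof -
  define e where "e = (if i \<in> A then real (3*i+4) else real (3*i+3))"
  have eC: "e \<in> Cmp A i" unfolding e_def by (rule Cmp_max)
  have eb: "real (3*i+3) \<le> e" "e \<le> real (3*i+4)" using Cmp_bounds[OF eC] by auto
  define b where "b = real (3*(Suc i)+3)"
  have bval: "b = real (3*i+6)" by (simp add: b_def)
  have bC: "b \<in> Cmp A (Suc i)" using Cmp_ne[of "Suc i" A] by (simp only: b_def)
  have eb2: "e < b" using eb by (simp add: bval)
  let ?S = "{e <..< b}"
  have "connectedin (TT A) ?S"
    using connectedin_continuous_map_image[OF cont_id_TT, of ?S] by (simp add: connectedin_iff_connected)
  moreover have "?S \<inter> NL (TT A) = {}"
  proof -
    have "z \<notin> KK A" if z: "e < z" "z < b" for z
    proof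
      assume "z \<in> KK A"
      then obtain j where j: "z \<in> Cmp A j" using KK_cases by blast
      have zb: "real (3*j+3) \<le> z" "z \<le> real (3*j+4)" using Cmp_bounds[OF j] by auto
      have "real (3*j+3) < real (3*i+6)" using zb z by (simp add: bval)
      then have "j \<le> i" by (simp only: of_nat_less_iff; arith)
      moreover have "j \<ge> i"
      proof (rule ccontr)
        assume "\<not> j \<ge> i"
        then have "3*j+4 \<le> 3*i+1" by simp
        then have "real (3*j+4) \<le> real (3*i+1)" by (simp only: of_nat_le_iff)
        then show False using zb z eb by simp
      qed
      ultimately have "j = i" by simp
      then show False
      proof (cases "i \<in> A")
        case True
        then have "e = real (3*i+4)" by (simp add: e_def)
        then show False using zb z \<open>j = i\<close> by simp
      next
        case False
        then have "z = real (3*i+3)" using j \<open>j = i\<close> by (simp add: Cmp_def)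
        moreover have "e = real (3*i+3)" using False by (simp add: e_def)
        ultimately show False using z by simp
      qed
    qed
    then show ?thesis unfolding NL_TT by auto
  qed
  moreover have clS: "TT A closure_of ?S \<subseteq> {e..b}" by (rule cl_sub_Icc) auto
  moreover have "TT A closure_of ?S \<inter> NL (TT A) \<subseteq> Cmp A i \<union> Cmp A (Suc i)"
  proof
    fix z assume z: "z \<in> TT A closure_of ?S \<inter> NL (TT A)"
    then have zK: "z \<in> KK A" and zI: "z \<in> {e..b}" using clS NL_TT by auto
    consider "z = e" | "z = b" | "e < z \<and> z < b" using zI by force
    then show "z \<in> Cmp A i \<union> Cmp A (Suc i)"
    proof cases
      case 1 then show ?thesis using eC by simp
    next
      case 2 then show ?thesis using bC by simp
    next
      case 3
      have "z \<notin> KK A"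
      proof
        assume "z \<in> KK A"
        then obtain j where j: "z \<in> Cmp A j" using KK_cases by blast
        have zb: "real (3*j+3) \<le> z" "z \<le> real (3*j+4)" using Cmp_bounds[OF j] by auto
        have "real (3*j+3) < real (3*i+6)" using zb 3 by (simp add: bval)
        then have "j \<le> i" by (simp only: of_nat_less_iff; arith)
        moreover have "j \<ge> i"
        proof (rule ccontr)
          assume "\<not> j \<ge> i"
          then have "3*j+4 \<le> 3*i+1" by simp
          then have "real (3*j+4) \<le> real (3*i+1)" by (simp only: of_nat_le_iff)
          then show False using zb 3 eb by simp
        qed
        ultimately have "j = i" by simp
        show False
        proof (cases "i \<in> A")
          case True
          then have "e = real (3*i+4)" by (simp add: e_def)
          then show False using zb 3 \<open>j = i\<close> by simp
        next
          case False
          then have "z = real (3*i+3)" using j \<open>j = i\<close> by (simp add: Cmp_def)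
          moreover have "e = real (3*i+3)" using False by (simp add: e_def)
          ultimately show False using 3 by simp
        qed
      qed
      then show ?thesis using zK by simp
    qed
  qed
  moreover have "e \<in> TT A closure_of ?S" "b \<in> TT A closure_of ?S"
  proof -
    have "{e..b} \<subseteq> TT A closure_of ?S" using closure_sub[of ?S A] closure_greaterThanLessThan[OF eb2] by simp
    then show "e \<in> TT A closure_of ?S" "b \<in> TT A closure_of ?S" using eb2 by auto
  qed
  moreover have "Cmp A i \<noteq> Cmp A (Suc i)" using Cmp_inj[of A i "Suc i"] by auto
  ultimately show ?thesis unfolding Adj_def using eC bC by blast
qed

lemma consec:
  assumes x: "x \<in> Cmp A i" and y: "y \<in> Cmp A j" and xy: "x < y"
    and gap: "\<And>z. x < z \<Longrightarrow> z < y \<Longrightarrow> z \<notin> KK A"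
  shows "j = Suc i"
proof -
  have xb: "real (3*i+3) \<le> x" "x \<le> real (3*i+4)" using Cmp_bounds[OF x] by auto
  have yb: "real (3*j+3) \<le> y" "y \<le> real (3*j+4)" using Cmp_bounds[OF y] by auto
  have "\<not> j < i"
  proof
    assume "j < i"
    then have "3*j+4 < 3*i+3" by simp
    then have "real (3*j+4) < real (3*i+3)" by (simp only: of_nat_less_iff)
    then show False using xb yb xy by linarith
  qed
  moreover have "j \<noteq> i"
  proof
    assume ji: "j = i"
    have "i \<in> A"
    proof (rule ccontr)
      assume "i \<notin> A"
      then have "x = y" using x y ji by (simp add: Cmp_def)
      then show False using xy by simp
    qed
    then have "(x + y) / 2 \<in> Cmp A i" using xb yb ji xy by (simp add: Cmp_def)
    then have "(x + y) / 2 \<in> KK A" using Cmp_KK by blast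
    moreover have "x < (x + y) / 2" "(x + y) / 2 < y" using xy by auto
    ultimately show False using gap by blast
  qed
  moreover have "\<not> Suc (Suc i) \<le> j"
  proof
    assume "Suc (Suc i) \<le> j"
    then have "3*i+9 \<le> 3*j+3" by simp
    then have "real (3*i+9) \<le> real (3*j+3)" by (simp only: of_nat_le_iff)
    define z where "z = real (3 * Suc i + 3)"
    have zK: "z \<in> KK A" using Cmp_ne[of "Suc i" A] Cmp_KK unfolding z_def by blast
    have "x < z" "z < y" using xb yb \<open>real (3*i+9) \<le> real (3*j+3)\<close> by (auto simp: z_def)
    then show False using gap zK by blast
  qed
  ultimately show ?thesis by linarith
qed

lemma Adj_TT_only:
  assumes adj: "Adj (TT A) (Cmp A i) (Cmp A j)"
  shows "j = Suc i \<or> i = Suc j"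
proof -
  obtain S where S: "connectedin (TT A) S" "S \<inter> NL (TT A) = {}"
    "TT A closure_of S \<inter> NL (TT A) \<subseteq> Cmp A i \<union> Cmp A j"
    "TT A closure_of S \<inter> Cmp A i \<noteq> {}" "TT A closure_of S \<inter> Cmp A j \<noteq> {}"
    and ne: "Cmp A i \<noteq> Cmp A j"
    using adj unfolding Adj_def by blast
  have ij: "i \<noteq> j" using ne by auto
  have SK: "S \<subseteq> - KK A" using S(2) unfolding NL_TT by auto
  have "connectedin (subtopology (TT A) (- KK A)) S" using S(1) SK by (simp add: connectedin_subtopology)
  then have "connectedin (top_of_set (- KK A)) S" by (simp add: sub_offK)
  then have conn: "connected S" by (simp add: connectedin_subtopology connectedin_iff_connected)
  have Sne: "S \<noteq> {}" using S(4) by auto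
  then obtain s0 where s0: "s0 \<in> S" by blast
  define l where "l = i + j + 1"
  have li: "l \<noteq> i" "l \<noteq> j" by (auto simp: l_def)
  show ?thesis
  proof (cases "\<forall>M. \<exists>s\<in>S. s < M")
    case True
    have sub: "{s. s < s0} \<subseteq> S"
    proof
      fix s assume "s \<in> {s. s < s0}"
      then have ss: "s < s0" by simp
      obtain s' where s': "s' \<in> S" "s' < s" using True by blast
      have "{s'..s0} \<subseteq> S" by (rule connected_contains_Icc[OF conn s'(1) s0])
      then show "s \<in> S" using s' ss by auto
    qed
    define p where "p = real (3*l+3)"
    have pK: "p \<in> KK A" "p \<in> Cmp A l" using Cmp_ne[of l A] Cmp_KK unfolding p_def by blast+
    have "p \<in> TT A closure_of {s. s < s0}" by (rule K_in_closure_left[OF pK(1)])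
    then have "p \<in> TT A closure_of S" using closure_of_mono[OF sub] by blast
    then have "p \<in> Cmp A i \<union> Cmp A j" using S(3) pK(1) NL_TT by blast
    then show ?thesis using pK(2) Cmp_disj[OF li(1)[symmetric]] Cmp_disj[OF li(2)[symmetric]] by blast
  next
    case False
    then obtain M where M: "\<forall>s\<in>S. M \<le> s" by (auto simp: not_less)
    have bdd: "\<exists>M'. \<forall>s\<in>S. s \<le> M'"
    proof (rule ccontr)
      assume "\<not> (\<exists>M'. \<forall>s\<in>S. s \<le> M')"
      then have unb: "\<forall>M'. \<exists>s\<in>S. M' < s" by (auto simp: not_le)
      obtain N :: nat where N: "s0 < real N" using reals_Archimedean2 by blast
      define p where "p = real (3*N+3)"
      obtain s where s: "s \<in> S" "p < s" using unb by blast
      have "s0 \<le> p" using N by (simp add: p_def)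
      then have "p \<in> S" using connected_contains_Icc[OF conn s0 s(1)] s(2) by auto
      moreover have "p \<in> KK A" using Cmp_ne[of N A] Cmp_KK unfolding p_def by blast
      ultimately show False using SK by blast
    qed
    then obtain M' where M': "\<forall>s\<in>S. s \<le> M'" by blast
    have bb: "bdd_below S" "bdd_above S" using M M' by (auto intro: bdd_belowI bdd_aboveI)
    define a where "a = Inf S"
    define b where "b = Sup S"
    have Sab: "S \<subseteq> {a..b}" using bb by (auto simp: a_def b_def intro: cInf_lower cSup_upper)
    have mid: "z \<in> S" if "a < z" "z < b" for z
    proof -
      have "Inf S < z" using that(1) by (simp add: a_def)
      then obtain s1 where s1: "s1 \<in> S" "s1 < z" using cInf_less_iff[OF Sne bb(1)] by blast
      have "z < Sup S" using that(2) by (simp add: b_def)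
      then obtain s2 where s2: "s2 \<in> S" "z < s2" using less_cSup_iff[OF Sne bb(2)] by blast
      show ?thesis using connected_contains_Icc[OF conn s1(1) s2(1)] s1 s2 by auto
    qed
    have clab: "TT A closure_of S \<subseteq> {a..b}" by (rule cl_sub_Icc[OF Sab])
    have clK: "z = a \<or> z = b" if "z \<in> TT A closure_of S" "z \<in> KK A" for z
    proof (rule ccontr)
      assume "\<not> (z = a \<or> z = b)"
      then have "a < z" "z < b" using that(1) clab by force+
      then have "z \<in> S" by (rule mid)
      then show False using that(2) SK by blast
    qed
    obtain x where x: "x \<in> TT A closure_of S" "x \<in> Cmp A i" using S(4) by blast
    obtain y where y: "y \<in> TT A closure_of S" "y \<in> Cmp A j" using S(5) by blast
    have xK: "x = a \<or> x = b" using clK x(1) Cmp_KK x(2) by blast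
    have yK: "y = a \<or> y = b" using clK y(1) Cmp_KK y(2) by blast
    have xy: "x \<noteq> y" using x(2) y(2) Cmp_disj[OF ij] by blast
    have ab: "a \<le> b" using Sab s0 by auto
    have gap: "z \<notin> KK A" if "a < z" "z < b" for z using mid[OF that] SK by blast
    consider "x = a" "y = b" | "x = b" "y = a" using xK yK xy by blast
    then show ?thesis
    proof cases
      case 1
      then have "x < y" using xy ab by simp
      then have "j = Suc i" using consec[OF x(2) y(2)] gap 1 by blast
      then show ?thesis by simp
    next
      case 2
      then have "y < x" using xy ab by simp
      then have "i = Suc j" using consec[OF y(2) x(2)] gap 2 by blast
      then show ?thesis by simp
    qed
  qed
qed

lemma Adj_TT_iff: "Adj (TT A) (Cmp A i) (Cmp A j) \<longleftrightarrow> (j = Suc i \<or> i = Suc j)"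
proof
  assume "Adj (TT A) (Cmp A i) (Cmp A j)"
  then show "j = Suc i \<or> i = Suc j" by (rule Adj_TT_only)
next
  assume "j = Suc i \<or> i = Suc j"
  then show "Adj (TT A) (Cmp A i) (Cmp A j)"
  proof
    assume "j = Suc i"
    then show ?thesis using Adj_TT_step[of A i] by simp
  next
    assume "i = Suc j"
    then show ?thesis using Adj_sym[OF Adj_TT_step[of A j]] by simp
  qed
qed

lemma two_pts: "i \<in> A \<longleftrightarrow> (\<exists>x y. x \<noteq> y \<and> x \<in> Cmp A i \<and> y \<in> Cmp A i)"
proof
  assume "i \<in> A"
  then have "real (3*i+3) \<in> Cmp A i" "real (3*i+4) \<in> Cmp A i" by (auto simp: Cmp_def)
  then show "\<exists>x y. x \<noteq> y \<and> x \<in> Cmp A i \<and> y \<in> Cmp A i"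
    by (intro exI[of _ "real (3*i+3)"] exI[of _ "real (3*i+4)"]) auto
next
  assume "\<exists>x y. x \<noteq> y \<and> x \<in> Cmp A i \<and> y \<in> Cmp A i"
  then show "i \<in> A" by (cases "i \<in> A") (auto simp: Cmp_def)
qed

lemma two_pts_image:
  assumes "inj h"
  shows "(\<exists>x y. x \<noteq> y \<and> x \<in> C \<and> y \<in> C) \<longleftrightarrow> (\<exists>x y. x \<noteq> y \<and> x \<in> h ` C \<and> y \<in> h ` C)"
proof
  assume "\<exists>x y. x \<noteq> y \<and> x \<in> C \<and> y \<in> C"
  then obtain x y where xy: "x \<noteq> y" "x \<in> C" "y \<in> C" by blast
  have "h x \<noteq> h y" using xy(1) assms by (simp add: inj_eq)
  then show "\<exists>x y. x \<noteq> y \<and> x \<in> h ` C \<and> y \<in> h ` C" using xy by blast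
next
  assume "\<exists>x y. x \<noteq> y \<and> x \<in> h ` C \<and> y \<in> h ` C"
  then obtain x y where xy: "x \<noteq> y" "x \<in> h ` C" "y \<in> h ` C" by blast
  then obtain x' y' where xy': "x = h x'" "y = h y'" "x' \<in> C" "y' \<in> C" by blast
  then have "x' \<noteq> y'" using xy(1) by auto
  then show "\<exists>x y. x \<noteq> y \<and> x \<in> C \<and> y \<in> C" using xy'(3,4) by blast
qed

theorem rigid:
  assumes h: "homeomorphic_map (TT A) (TT B) h"
  shows "A = B"
proof -
  obtain g where g: "homeomorphic_map (TT B) (TT A) g" "\<And>x. g (h x) = x" "\<And>y. h (g y) = y"
    using hinv[OF h] by (metis topspace_TT UNIV_I)
  have gh: "g ` (h ` X) = X" for X using g(2) by (simp add: image_image)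
  have hg: "h ` (g ` X) = X" for X using g(3) by (simp add: image_image)
  have imA: "\<exists>j. h ` Cmp A i = Cmp B j" for i
  proof -
    have eq: "range (Cmp B) = (image h) ` range (Cmp A)" using CS_image[OF h] unfolding CS_TT .
    have "h ` Cmp A i \<in> (image h) ` range (Cmp A)" by (intro imageI rangeI)
    then have "h ` Cmp A i \<in> range (Cmp B)" unfolding eq .
    then show ?thesis by (auto simp: image_iff)
  qed
  have imB: "\<exists>i. g ` Cmp B j = Cmp A i" for j
  proof -
    have eq: "range (Cmp A) = (image g) ` range (Cmp B)" using CS_image[OF g(1)] unfolding CS_TT .
    have "g ` Cmp B j \<in> (image g) ` range (Cmp B)" by (intro imageI rangeI)
    then have "g ` Cmp B j \<in> range (Cmp A)" unfolding eq .
    then show ?thesis by (auto simp: image_iff)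
  qed
  have adjH: "Adj (TT B) (h ` P) (h ` Q)" if "Adj (TT A) P Q" for P Q
    using Adj_image[OF h _ _ that] by simp
  have adjG: "Adj (TT A) (g ` P) (g ` Q)" if "Adj (TT B) P Q" for P Q
    using Adj_image[OF g(1) _ _ that] by simp
  have P0: "h ` Cmp A 0 = Cmp B 0"
  proof -
    obtain j where j: "h ` Cmp A 0 = Cmp B j" using imA by blast
    have "j = 0"
    proof (rule ccontr)
      assume "j \<noteq> 0"
      then obtain j' where j': "j = Suc j'" by (cases j) auto
      have gj: "g ` Cmp B j = Cmp A 0" using gh[of "Cmp A 0"] j by simp
      obtain a where a: "g ` Cmp B j' = Cmp A a" using imB by blast
      obtain b where b: "g ` Cmp B (Suc j) = Cmp A b" using imB by blast
      have "Adj (TT B) (Cmp B j') (Cmp B j)" using Adj_TT_iff[of B j' j] j' by simp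
      then have "Adj (TT A) (g ` Cmp B j') (g ` Cmp B j)" by (rule adjG)
      then have "Adj (TT A) (Cmp A a) (Cmp A 0)" unfolding a gj .
      then have "0 = Suc a \<or> a = Suc 0" using Adj_TT_iff[of A a 0] by simp
      then have a1: "a = 1" by simp
      have "Adj (TT B) (Cmp B (Suc j)) (Cmp B j)" using Adj_TT_iff[of B "Suc j" j] by simp
      then have "Adj (TT A) (g ` Cmp B (Suc j)) (g ` Cmp B j)" by (rule adjG)
      then have "Adj (TT A) (Cmp A b) (Cmp A 0)" unfolding b gj .
      then have "0 = Suc b \<or> b = Suc 0" using Adj_TT_iff[of A b 0] by simp
      then have b1: "b = 1" by simp
      have "g ` Cmp B j' = g ` Cmp B (Suc j)" using a b a1 b1 by simp
      then have "h ` g ` Cmp B j' = h ` g ` Cmp B (Suc j)" by simp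
      then have "Cmp B j' = Cmp B (Suc j)" unfolding hg .
      then have "j' = Suc j" by (rule Cmp_inj)
      then show False using j' by simp
    qed
    then show ?thesis using j by simp
  qed
  have P1: "h ` Cmp A (Suc 0) = Cmp B (Suc 0)"
  proof -
    obtain j where j: "h ` Cmp A (Suc 0) = Cmp B j" using imA by blast
    have "Adj (TT A) (Cmp A 0) (Cmp A (Suc 0))" using Adj_TT_iff[of A 0 "Suc 0"] by simp
    then have "Adj (TT B) (h ` Cmp A 0) (h ` Cmp A (Suc 0))" by (rule adjH)
    then have "Adj (TT B) (Cmp B 0) (Cmp B j)" unfolding P0 j .
    then have "j = Suc 0 \<or> 0 = Suc j" using Adj_TT_iff[of B 0 j] by simp
    then have "j = Suc 0" by simp
    then show ?thesis using j by simp
  qed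
  have step: "h ` Cmp A i = Cmp B i \<and> h ` Cmp A (Suc i) = Cmp B (Suc i)" for i
  proof (induction i)
    case 0 then show ?case using P0 P1 by simp
  next
    case (Suc i)
    then have IH: "h ` Cmp A i = Cmp B i" "h ` Cmp A (Suc i) = Cmp B (Suc i)" by auto
    obtain j where j: "h ` Cmp A (Suc (Suc i)) = Cmp B j" using imA by blast
    have "Adj (TT A) (Cmp A (Suc i)) (Cmp A (Suc (Suc i)))" using Adj_TT_iff[of A "Suc i" "Suc (Suc i)"] by simp
    then have "Adj (TT B) (h ` Cmp A (Suc i)) (h ` Cmp A (Suc (Suc i)))" by (rule adjH)
    then have "Adj (TT B) (Cmp B (Suc i)) (Cmp B j)" unfolding IH(2) j .
    then have "j = Suc (Suc i) \<or> Suc i = Suc j" using Adj_TT_iff[of B "Suc i" j] by simp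
    moreover have "j \<noteq> i"
    proof
      assume "j = i"
      then have "h ` Cmp A (Suc (Suc i)) = h ` Cmp A i" using j IH(1) by simp
      then have "g ` h ` Cmp A (Suc (Suc i)) = g ` h ` Cmp A i" by simp
      then have "Cmp A (Suc (Suc i)) = Cmp A i" unfolding gh .
      then have "Suc (Suc i) = i" by (rule Cmp_inj)
      then show False by simp
    qed
    ultimately have "j = Suc (Suc i)" by simp
    then show ?case using j IH(2) by simp
  qed
  have injh: "inj h" by (rule injI) (metis g(2))
  show "A = B"
  proof (rule set_eqI)
    fix i
    have "i \<in> A \<longleftrightarrow> (\<exists>x y. x \<noteq> y \<and> x \<in> Cmp A i \<and> y \<in> Cmp A i)" by (rule two_pts)
    also have "\<dots> \<longleftrightarrow> (\<exists>x y. x \<noteq> y \<and> x \<in> h ` Cmp A i \<and> y \<in> h ` Cmp A i)" by (rule two_pts_image[OF injh])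
    also have "\<dots> \<longleftrightarrow> (\<exists>x y. x \<noteq> y \<and> x \<in> Cmp B i \<and> y \<in> Cmp B i)" using step[of i] by simp
    also have "\<dots> \<longleftrightarrow> i \<in> B" by (rule two_pts[symmetric])
    finally show "i \<in> A \<longleftrightarrow> i \<in> B" .
  qed
qed

definition qq :: "nat \<Rightarrow> real" where "qq n = from_nat_into (\<rat> :: real set) n"

definition cutset :: "real \<Rightarrow> nat set" where "cutset r = {n. qq n < r}"

lemma qq_onto: "\<rho> \<in> \<rat> \<Longrightarrow> \<exists>n. qq n = \<rho>"
proof -
  assume r: "\<rho> \<in> \<rat>"
  have "(\<rat> :: real set) \<noteq> {}" using Rats_0 by blast
  then have "range (from_nat_into (\<rat> :: real set)) = \<rat>" by (rule range_from_nat_into[OF _ countable_rat])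
  then have "\<rho> \<in> range (from_nat_into (\<rat> :: real set))" using r by simp
  then obtain n where "\<rho> = from_nat_into (\<rat> :: real set) n" by blast
  then show ?thesis unfolding qq_def by blast
qed

lemma cutset_lt: "r < r' \<Longrightarrow> cutset r \<noteq> cutset r'"
proof -
  assume "r < r'"
  then obtain \<rho> where \<rho>: "\<rho> \<in> \<rat>" "r < \<rho>" "\<rho> < r'" using Rats_dense_in_real by blast
  then obtain n where n: "qq n = \<rho>" using qq_onto by blast
  then have "n \<in> cutset r'" "n \<notin> cutset r" using \<rho> by (auto simp: cutset_def)
  then show ?thesis by blast
qed

lemma cutset_inj: "inj cutset"
proof (rule injI)
  fix r r' assume e: "cutset r = cutset r'"
  show "r = r'"
  proof (rule ccontr)
    assume "r \<noteq> r'"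
    then consider "r < r'" | "r' < r" by linarith
    then show False
    proof cases
      case 1 then show False using cutset_lt[OF 1] e by simp
    next
      case 2 then show False using cutset_lt[OF 2] e by simp
    qed
  qed
qed

theorem theorem4:
  shows "\<exists>F. F \<subseteq> coarser_Hausdorff_topologies \<and>
             F \<approx> (UNIV :: real set) \<and>
             (\<forall>T\<in>F. completely_metrizable_space T) \<and>
             (\<forall>S\<in>F. \<forall>T\<in>F. S \<noteq> T \<longrightarrow> \<not> (S homeomorphic_space T))"
proof -
  define Fam where "Fam = range (\<lambda>r. TT (cutset r))"
  have inj: "inj (\<lambda>r. TT (cutset r))"
  proof (rule injI)
    fix r r' assume "TT (cutset r) = TT (cutset r')"
    then have "homeomorphic_map (TT (cutset r)) (TT (cutset r')) id" by (simp add: homeomorphic_map_id)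
    then have "cutset r = cutset r'" by (rule rigid)
    then show "r = r'" using cutset_inj by (simp add: inj_eq)
  qed
  have 1: "Fam \<subseteq> coarser_Hausdorff_topologies"
  proof
    fix T assume "T \<in> Fam"
    then obtain r where r: "T = TT (cutset r)" by (auto simp: Fam_def)
    have "\<forall>U. openin T U \<longrightarrow> open U" using TT_open r by blast
    moreover have "Hausdorff_space T" using TT_Hausdorff r by simp
    moreover have "topspace T = UNIV" using r by simp
    ultimately show "T \<in> coarser_Hausdorff_topologies" unfolding coarser_Hausdorff_topologies_def by blast
  qed
  have 2: "Fam \<approx> (UNIV :: real set)"
  proof -
    have "bij_betw (\<lambda>r. TT (cutset r)) UNIV Fam" using inj by (simp add: Fam_def bij_betw_def)
    then have "(UNIV :: real set) \<approx> Fam" unfolding eqpoll_def by blast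
    then show ?thesis by (rule eqpoll_sym)
  qed
  have 3: "\<forall>T\<in>Fam. completely_metrizable_space T"
  proof
    fix T assume "T \<in> Fam"
    then obtain r where r: "T = TT (cutset r)" by (auto simp: Fam_def)
    show "completely_metrizable_space T" unfolding r by (rule TT_cms)
  qed
  have 4: "\<forall>S\<in>Fam. \<forall>T\<in>Fam. S \<noteq> T \<longrightarrow> \<not> (S homeomorphic_space T)"
  proof (intro ballI impI notI)
    fix S T assume ST: "S \<in> Fam" "T \<in> Fam" "S \<noteq> T" "S homeomorphic_space T"
    obtain r where r: "S = TT (cutset r)" using ST(1) by (auto simp: Fam_def)
    obtain r' where r': "T = TT (cutset r')" using ST(2) by (auto simp: Fam_def)
    obtain h where "homeomorphic_map S T h" using ST(4) homeomorphic_space by blast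
    then have "homeomorphic_map (TT (cutset r)) (TT (cutset r')) h" using r r' by simp
    then have "cutset r = cutset r'" by (rule rigid)
    then show False using ST(3) r r' by simp
  qed
  show ?thesis by (rule exI[of _ Fam]) (intro conjI 1 2 3 4)
qed

end
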